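(* Under the model assumptions, fix $q\in(0,1)$, $\tilde w^0\in\mathrm{dom}(h)$ and $\rho_1,\dots,\rho_n>0$. There is a constant $C>0$ independent of $\tau$ such that for every $\tau\in(0,1]$, Algorithm 2 applied to $\min_w \sum_{i=0}^nP_i(w)+h(w)$ with inputs $\tau,q,\tilde w^0,\rho_1,\dots,\rho_n$ terminates after at most $C(1+|\log\tau|)$ iterations.
   Context: Let $n,d\ge1$. Model assumptions: $P_0,\dots,P_n:\mathbb{R}^d\to\mathbb{R}$ are continuously differentiable with locally Lipschitz gradients on $\mathbb{R}^d$, and each is strongly convex with modulus $\sigma>0$, i.e. $\langle\nabla P_i(u)-\nabla P_i(v),u-v\rangle\ge\sigma\|u-v\|^2$ for all $u,v$; $h:\mathbb{R}^d\to(-\infty,\infty]$ is proper closed convex. $\|\cdot\|$ Euclidean, $\|\cdot\|_\infty$ max norm, $\partial$ convex subdifferential, $\mathrm{dist}_\infty(u,S)=\inf_{v\in S}\|u-v\|_\infty$. Algorithm 2: inputs $\tau\in(0,1]$, $q\in(0,1)$, $\tilde w^0\in\mathrm{dom}(h)$, $\rho_i>0$ ($1\le i\le n$). Initialize $w^0=\tilde w^0$, $u_i^0=\tilde w^0$, $\lambda_i^0=-\nabla P_i(\tilde w^0)$, $\tilde u_i^0=\tilde w^0-\nabla P_i(\tilde w^0)/\rho_i$. For $t=0,1,2,\dots$: set $\varepsilon_{t+1}=q^t$; let $w^{t+1}$ be any point with $\mathrm{dist}_\infty(0,\partial\varphi_{0,t}(w^{t+1}))\le\varepsilon_{t+1}$,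 where $\varphi_{0,t}(w)=P_0(w)+h(w)+\sum_{i=1}^n\frac{\rho_i}2\|\tilde u_i^t-w\|^2$; for each $1\le i\le n$ let $u_i^{t+1}$ be any point with $\|\nabla\varphi_{i,t}(u_i^{t+1})\|_\infty\le\varepsilon_{t+1}$, where $\varphi_{i,t}(u)=P_i(u)+\langle\lambda_i^t,u-w^{t+1}\rangle+\frac{\rho_i}2\|u-w^{t+1}\|^2$; set $\lambda_i^{t+1}=\lambda_i^t+\rho_i(u_i^{t+1}-w^{t+1})$, $\tilde u_i^{t+1}=u_i^{t+1}+\lambda_i^{t+1}/\rho_i$, $\tilde\varepsilon_{i,t+1}=\|\nabla\varphi_{i,t}(w^{t+1})-\rho_i(w^{t+1}-u_i^t)\|_\infty$; terminate and output $w^{t+1}$ if $\varepsilon_{t+1}+\sum_{i=1}^n\tilde\varepsilon_{i,t+1}\le\tau$. *)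

theory Defs
  imports "HOL-Analysis.Analysis"
begin

definition proper_closed_convex :: "('a::real_normed_vector \<Rightarrow> ereal) \<Rightarrow> bool" where
  "proper_closed_convex h \<longleftrightarrow>
     (\<forall>x. h x \<noteq> -\<infinity>) \<and> (\<exists>x. h x \<noteq> \<infinity>) \<and>
     closed {(x, r::real). h x \<le> ereal r} \<and>
     (\<forall>x y t. 0 \<le> t \<and> t \<le> 1 \<longrightarrow>
        h ((1 - t) *\<^sub>R x + t *\<^sub>R y) \<le> ereal (1 - t) * h x + ereal t * h y)"

definition subdiff :: "('a::real_inner \<Rightarrow> ereal) \<Rightarrow> 'a \<Rightarrow> 'a set" where
  "subdiff f x = {g. f x \<noteq> \<infinity> \<and> (\<forall>y. f y \<ge> f x + ereal (g \<bullet> (y - x)))}"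

text \<open>Max-norm distance from 0 to a set (infimum, = +inf for the empty set).\<close>
definition dist_inf0 :: "(real ^ 'd) set \<Rightarrow> ereal" where
  "dist_inf0 S = (INF g\<in>S. ereal (infnorm g))"

definition smooth_strongly_convex ::
  "(real ^ 'd \<Rightarrow> real) \<Rightarrow> (real ^ 'd \<Rightarrow> real ^ 'd) \<Rightarrow> real \<Rightarrow> bool" where
  "smooth_strongly_convex P gP \<sigma> \<longleftrightarrow>
     (\<forall>x. (P has_derivative (\<lambda>v. gP x \<bullet> v)) (at x)) \<and>
     (\<forall>x. \<exists>\<delta>>0. \<exists>L. \<forall>u\<in>ball x \<delta>. \<forall>v\<in>ball x \<delta>. norm (gP u - gP v) \<le> L * norm (u - v)) \<and>
     (\<forall>u v. (gP u - gP v) \<bullet> (u - v) \<ge> \<sigma> * (norm (u - v))\<^sup>2)"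

text \<open>\<open>phi0 n P h \<rho> ut w\<close> is \<open>\<phi>_{0,t}\<close> with \<open>ut i = \<tilde>u_i^t\<close>.\<close>
definition phi0 :: "nat \<Rightarrow> (nat \<Rightarrow> real ^ 'd \<Rightarrow> real) \<Rightarrow> (real ^ 'd \<Rightarrow> ereal) \<Rightarrow> (nat \<Rightarrow> real)
                     \<Rightarrow> (nat \<Rightarrow> real ^ 'd) \<Rightarrow> real ^ 'd \<Rightarrow> ereal" where
  "phi0 n P h \<rho> ut w = ereal (P 0 w) + h w + ereal (\<Sum>i=1..n. \<rho> i / 2 * (norm (ut i - w))\<^sup>2)"

text \<open>Gradient of \<open>\<phi>_{i,t}(u) = P_i(u) + <\<lambda>, u - w> + \<rho>/2 |u - w|^2\<close>.\<close>
definition grad_phi :: "(real ^ 'd \<Rightarrow> real ^ 'd) \<Rightarrow> real \<Rightarrow> real ^ 'd \<Rightarrow> real ^ 'd \<Rightarrow> real ^ 'd \<Rightarrow> real ^ 'd" where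
  "grad_phi gP r lam w u = gP u + lam + r *\<^sub>R (u - w)"

text \<open>The tilde-variables satisfy \<open>\<tilde>u_i^t = u_i^t + \<lambda>_i^t/\<rho>_i\<close> for all t (also t = 0).\<close>
definition alg2_run ::
  "nat \<Rightarrow> (nat \<Rightarrow> real ^ 'd \<Rightarrow> real) \<Rightarrow> (nat \<Rightarrow> real ^ 'd \<Rightarrow> real ^ 'd) \<Rightarrow> (real ^ 'd \<Rightarrow> ereal)
   \<Rightarrow> real \<Rightarrow> real ^ 'd \<Rightarrow> (nat \<Rightarrow> real)
   \<Rightarrow> (nat \<Rightarrow> real ^ 'd) \<Rightarrow> (nat \<Rightarrow> nat \<Rightarrow> real ^ 'd) \<Rightarrow> (nat \<Rightarrow> nat \<Rightarrow> real ^ 'd) \<Rightarrow> bool" where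
  "alg2_run n P gP h q w0 \<rho> w u lam \<longleftrightarrow>
     w 0 = w0 \<and>
     (\<forall>i\<in>{1..n}. u i 0 = w0 \<and> lam i 0 = - gP i w0) \<and>
     (\<forall>t. dist_inf0 (subdiff (phi0 n P h \<rho> (\<lambda>i. u i t + (1 / \<rho> i) *\<^sub>R lam i t)) (w (Suc t)))
            \<le> ereal (q ^ t)) \<and>
     (\<forall>t. \<forall>i\<in>{1..n}.
        infnorm (grad_phi (gP i) (\<rho> i) (lam i t) (w (Suc t)) (u i (Suc t))) \<le> q ^ t \<and>
        lam i (Suc t) = lam i t + \<rho> i *\<^sub>R (u i (Suc t) - w (Suc t)))"

text \<open>\<open>\<tilde>\<epsilon>_{i,t+1}\<close>.\<close>
definition eps_tilde ::
  "(nat \<Rightarrow> real ^ 'd \<Rightarrow> real ^ 'd) \<Rightarrow> (nat \<Rightarrow> real) \<Rightarrow> (nat \<Rightarrow> real ^ 'd)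
   \<Rightarrow> (nat \<Rightarrow> nat \<Rightarrow> real ^ 'd) \<Rightarrow> (nat \<Rightarrow> nat \<Rightarrow> real ^ 'd) \<Rightarrow> nat \<Rightarrow> nat \<Rightarrow> real" where
  "eps_tilde gP \<rho> w u lam i t =
     infnorm (grad_phi (gP i) (\<rho> i) (lam i t) (w (Suc t)) (w (Suc t))
              - \<rho> i *\<^sub>R (w (Suc t) - u i t))"

end

theory Submission
  imports Defs
begin


lemma line_deriv:
  fixes P :: "real ^ 'd \<Rightarrow> real"
  assumes "(P has_derivative (\<lambda>w. g \<bullet> w)) (at (x + s0 *\<^sub>R v))"
  shows "((\<lambda>s. P (x + s *\<^sub>R v)) has_real_derivative (g \<bullet> v)) (at s0)"
proof -
  have d: "((\<lambda>s. x + s *\<^sub>R v) has_derivative (\<lambda>s. s *\<^sub>R v)) (at s0)"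
    by (auto intro!: derivative_eq_intros)
  have "((\<lambda>s. P (x + s *\<^sub>R v)) has_derivative (\<lambda>s. g \<bullet> (s *\<^sub>R v))) (at s0)"
    using has_derivative_compose[OF d assms] by simp
  moreover have "(\<lambda>s. g \<bullet> (s *\<^sub>R v)) = (*) (g \<bullet> v)" by (auto simp: mult.commute)
  ultimately show ?thesis unfolding has_field_derivative_def by simp
qed

lemma ssc_grad_ineq:
  fixes P :: "real ^ 'd \<Rightarrow> real"
  assumes "smooth_strongly_convex P gP \<sigma>"
  shows "P y \<ge> P x + gP x \<bullet> (y - x) + \<sigma>/2 * (norm (y - x))\<^sup>2"
proof -
  define v where "v = y - x"
  define f where "f s = P (x + s *\<^sub>R v) - s * (gP x \<bullet> v) - \<sigma>/2 * s^2 * (norm v)^2" for s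
  have der: "(\<forall>z. (P has_derivative (\<lambda>v. gP z \<bullet> v)) (at z))"
    and mon: "\<forall>u w. (gP u - gP w) \<bullet> (u - w) \<ge> \<sigma> * (norm (u - w))\<^sup>2"
    using assms unfolding smooth_strongly_convex_def by auto
  have "f 0 \<le> f 1"
  proof (rule DERIV_nonneg_imp_nondecreasing[of 0 1 f])
    fix s :: real assume s: "0 \<le> s" "s \<le> 1"
    have d1: "((\<lambda>s. P (x + s *\<^sub>R v)) has_real_derivative (gP (x + s *\<^sub>R v) \<bullet> v)) (at s)"
      by (rule line_deriv) (use der in auto)
    have d2: "((\<lambda>s. s * (gP x \<bullet> v)) has_real_derivative (gP x \<bullet> v)) (at s)"
      by (auto intro!: derivative_eq_intros)
    have d3: "((\<lambda>s. \<sigma>/2 * s^2 * (norm v)^2) has_real_derivative (\<sigma> * s * (norm v)^2)) (at s)"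
      by (auto intro!: derivative_eq_intros)
    have "(f has_real_derivative (gP (x + s *\<^sub>R v) \<bullet> v - gP x \<bullet> v - \<sigma> * s * (norm v)^2)) (at s)"
      unfolding f_def by (intro DERIV_diff d1 d2 d3)
    moreover have "gP (x + s *\<^sub>R v) \<bullet> v - gP x \<bullet> v - \<sigma> * s * (norm v)^2 \<ge> 0"
    proof (cases "s = 0")
      case True then show ?thesis by simp
    next
      case False
      then have sp: "s > 0" using s by auto
      have "(gP (x + s *\<^sub>R v) - gP x) \<bullet> ((x + s *\<^sub>R v) - x) \<ge> \<sigma> * (norm ((x + s *\<^sub>R v) - x))\<^sup>2"
        using mon by blast
      then have "s * ((gP (x + s *\<^sub>R v) - gP x) \<bullet> v) \<ge> s * (\<sigma> * s * (norm v)^2)"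
        by (simp add: power2_eq_square abs_of_pos[OF sp] algebra_simps)
      then have "(gP (x + s *\<^sub>R v) - gP x) \<bullet> v \<ge> \<sigma> * s * (norm v)^2"
        using sp by simp
      then show ?thesis by (simp add: inner_diff_left)
    qed
    ultimately show "\<exists>y. (f has_real_derivative y) (at s) \<and> 0 \<le> y" by blast
  qed simp
  then show ?thesis unfolding f_def v_def by simp
qed

lemma dq_lim:
  fixes S :: "real ^ 'd \<Rightarrow> real"
  assumes "(S has_derivative (\<lambda>w. a \<bullet> w)) (at x)"
  shows "((\<lambda>s. (S (x + s *\<^sub>R v) - S x) / s) \<longlongrightarrow> a \<bullet> v) (at_right 0)"
proof -
  have "((\<lambda>s. S (x + s *\<^sub>R v)) has_real_derivative (a \<bullet> v)) (at 0 within {0<..})"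
    using line_deriv[of S a x 0 v] assms by (simp add: has_field_derivative_at_within)
  then show ?thesis unfolding has_field_derivative_iff by simp
qed

lemma pcc_props:
  assumes "proper_closed_convex h"
  shows "\<forall>x. h x \<noteq> -\<infinity>"
    and "closed {(x, r::real). h x \<le> ereal r}"
    and "\<And>x y t. 0 \<le> t \<Longrightarrow> t \<le> 1 \<Longrightarrow> h ((1 - t) *\<^sub>R x + t *\<^sub>R y) \<le> ereal (1 - t) * h x + ereal t * h y"
  using assms unfolding proper_closed_convex_def by auto

lemma sum_rule:
  fixes S :: "real ^ 'd \<Rightarrow> real" and h :: "real ^ 'd \<Rightarrow> ereal"
  assumes pcc: "proper_closed_convex h"
    and dS: "(S has_derivative (\<lambda>w. a \<bullet> w)) (at x)"
    and fx: "h x \<noteq> \<infinity>"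
    and sub: "\<forall>y. ereal (S x) + h x + ereal (g \<bullet> (y - x)) \<le> ereal (S y) + h y"
  shows "h x + ereal ((g - a) \<bullet> (y - x)) \<le> h y"
proof (cases "h y = \<infinity>")
  case True then show ?thesis by simp
next
  case False
  note nm = pcc_props(1)[OF pcc] and cvx = pcc_props(3)[OF pcc]
  obtain hx where hx: "h x = ereal hx" using fx nm by (cases "h x") auto
  obtain hy where hy: "h y = ereal hy" using False nm by (cases "h y") auto
  define v where "v = y - x"
  have key: "g \<bullet> v - (S (x + s *\<^sub>R v) - S x) / s \<le> hy - hx" if s: "0 < s" "s < 1" for s
  proof -
    let ?z = "(1 - s) *\<^sub>R x + s *\<^sub>R y"
    have zeq: "?z = x + s *\<^sub>R v" by (simp add: v_def algebra_simps)
    have "h ?z \<le> ereal (1 - s) * h x + ereal s * h y" using cvx s by auto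
    then have hz1: "h ?z \<le> ereal ((1 - s) * hx + s * hy)" by (simp add: hx hy)
    then obtain hz where hz: "h ?z = ereal hz" "hz \<le> (1 - s) * hx + s * hy"
      using nm by (cases "h ?z") auto
    have "ereal (S x) + h x + ereal (g \<bullet> (?z - x)) \<le> ereal (S ?z) + h ?z" using sub by blast
    then have "S x + hx + g \<bullet> (?z - x) \<le> S ?z + hz" by (simp add: hx hz)
    then have "S x + hx + s * (g \<bullet> v) \<le> S (x + s *\<^sub>R v) + hz" by (simp add: zeq)
    then have A: "s * (g \<bullet> v) - (S (x + s *\<^sub>R v) - S x) \<le> s * (hy - hx)"
      using hz(2) by (simp add: algebra_simps)
    have "g \<bullet> v - (S (x + s *\<^sub>R v) - S x) / s = (s * (g \<bullet> v) - (S (x + s *\<^sub>R v) - S x)) / s"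
      using s by (simp add: field_simps)
    also have "\<dots> \<le> (s * (hy - hx)) / s" using A s by (intro divide_right_mono) auto
    also have "\<dots> = hy - hx" using s by simp
    finally show ?thesis .
  qed
  have lim: "((\<lambda>s. g \<bullet> v - (S (x + s *\<^sub>R v) - S x) / s) \<longlongrightarrow> g \<bullet> v - a \<bullet> v) (at_right 0)"
    using dq_lim[OF dS] by (intro tendsto_intros)
  have ev: "eventually (\<lambda>s. g \<bullet> v - (S (x + s *\<^sub>R v) - S x) / s \<le> hy - hx) (at_right 0)"
    unfolding eventually_at_right[OF zero_less_one] using key by (auto intro!: exI[of _ 1])
  have "g \<bullet> v - a \<bullet> v \<le> hy - hx" by (rule tendsto_upperbound[OF lim ev]) simp
  then show ?thesis by (simp add: hx hy v_def inner_diff_left)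
qed

lemma calm:
  fixes gP :: "real ^ 'd \<Rightarrow> real ^ 'd"
  assumes "smooth_strongly_convex P gP \<sigma>"
  shows "\<exists>L\<ge>0. \<forall>z. norm (z - c) \<le> R \<longrightarrow> norm (gP z - gP c) \<le> L * norm (z - c)"
proof -
  from assms have ll: "\<forall>x. \<exists>\<delta>>0. \<exists>L. \<forall>u\<in>ball x \<delta>. \<forall>v\<in>ball x \<delta>. norm (gP u - gP v) \<le> L * norm (u - v)"
    unfolding smooth_strongly_convex_def by auto
  have cont: "continuous_on UNIV gP"
  proof (rule continuous_at_imp_continuous_on, intro ballI)
    fix x :: "real ^ 'd"
    obtain \<delta> L where \<delta>: "\<delta> > 0" and L: "\<forall>u\<in>ball x \<delta>. \<forall>v\<in>ball x \<delta>. norm (gP u - gP v) \<le> L * norm (u - v)"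
      using ll by blast
    have "(max L 0)-lipschitz_on (ball x \<delta>) gP"
    proof (rule lipschitz_onI)
      fix u v assume "u \<in> ball x \<delta>" "v \<in> ball x \<delta>"
      then have "norm (gP u - gP v) \<le> L * norm (u - v)" using L by blast
      also have "\<dots> \<le> max L 0 * norm (u - v)" by (intro mult_right_mono) auto
      finally show "dist (gP u) (gP v) \<le> max L 0 * dist u v" by (simp add: dist_norm)
    qed simp
    then have "continuous_on (ball x \<delta>) gP" by (rule lipschitz_on_continuous_on)
    then show "isCont gP x" using \<delta> by (simp add: continuous_on_interior)
  qed
  have "bounded (gP ` cball c R)"
    by (intro compact_imp_bounded compact_continuous_image continuous_on_subset[OF cont]) auto
  then obtain B where B: "\<forall>z\<in>cball c R. norm (gP z) \<le> B" by (auto simp: bounded_iff)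
  obtain \<delta> L where \<delta>: "\<delta> > 0" and L: "\<forall>u\<in>ball c \<delta>. \<forall>v\<in>ball c \<delta>. norm (gP u - gP v) \<le> L * norm (u - v)"
    using ll by blast
  define L' where "L' = max (max L 0) (2 * max B 0 / \<delta>)"
  show ?thesis
  proof (intro exI[of _ L'] conjI allI impI)
    show "L' \<ge> 0" by (simp add: L'_def)
    fix z assume z: "norm (z - c) \<le> R"
    show "norm (gP z - gP c) \<le> L' * norm (z - c)"
    proof (cases "norm (z - c) < \<delta>")
      case True
      then have "z \<in> ball c \<delta>" "c \<in> ball c \<delta>" using \<delta> by (auto simp: dist_norm norm_minus_commute)
      then have "norm (gP z - gP c) \<le> L * norm (z - c)" using L by blast
      also have "\<dots> \<le> L' * norm (z - c)" by (intro mult_right_mono) (auto simp: L'_def)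
      finally show ?thesis .
    next
      case False
      have R0: "0 \<le> R" using z norm_ge_zero[of "z - c"] by linarith
      have zc: "z \<in> cball c R" "c \<in> cball c R" using z R0
        by (auto simp: dist_norm norm_minus_commute)
      have nz: "norm (gP z) \<le> B" "norm (gP c) \<le> B" using B zc by auto
      have "norm (gP z - gP c) \<le> norm (gP z) + norm (gP c)" by (rule norm_triangle_ineq4)
      also have "norm (gP z) + norm (gP c) \<le> 2 * max B 0" using nz by linarith
      also have "\<dots> = (2 * max B 0 / \<delta>) * \<delta>" using \<delta> by simp
      also have "\<dots> \<le> (2 * max B 0 / \<delta>) * norm (z - c)" using False \<delta>
        by (intro mult_left_mono) auto
      also have "\<dots> \<le> L' * norm (z - c)" by (intro mult_right_mono) (auto simp: L'_def)
      finally show ?thesis .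
    qed
  qed
qed

lemma exists_min:
  fixes F :: "real ^ 'd \<Rightarrow> real" and h :: "real ^ 'd \<Rightarrow> ereal"
  assumes contF: "continuous_on UNIV F"
    and clo: "closed {(x, r::real). h x \<le> ereal r}"
    and hw0: "h w0 = ereal hv"
    and lowb: "\<forall>y. ereal (c0 + \<xi> \<bullet> y) \<le> h y"
    and grow: "\<forall>y. F w0 + G \<bullet> (y - w0) + \<mu> * (norm (y - w0))^2 \<le> F y"
    and mu: "\<mu> > 0"
  shows "\<exists>z. \<forall>y. ereal (F z) + h z \<le> ereal (F y) + h y"
proof -
  define B where "B = norm G + norm \<xi>"
  define D where "D = hv - c0 - \<xi> \<bullet> w0"
  define R where "R = 1 + (B + abs D) / \<mu>"
  have B0: "B \<ge> 0" by (simp add: B_def)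
  have R1: "R \<ge> 1" using mu B0 by (simp add: R_def)
  have far: "ereal (F w0) + h w0 < ereal (F y) + h y" if y: "norm (y - w0) > R" for y
  proof -
    define r where "r = norm (y - w0)"
    have r1: "r > 1" using y R1 by (simp add: r_def)
    have "\<mu> * r > \<mu> * R" using y mu by (simp add: r_def)
    also have "\<mu> * R = \<mu> + B + abs D" using mu by (simp add: R_def field_simps)
    finally have m: "\<mu> * r - B > \<mu> + abs D" by simp
    then have "r * (\<mu> * r - B) \<ge> 1 * (\<mu> * r - B)" using r1 mu
      by (intro mult_right_mono) auto
    with m mu have rr: "r * (\<mu> * r - B) > D" by auto
    have g1: "G \<bullet> (y - w0) \<ge> - (norm G * r)"
      using Cauchy_Schwarz_ineq2[of G "y - w0"] by (simp add: r_def abs_le_iff)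
    have g2: "\<xi> \<bullet> (y - w0) \<ge> - (norm \<xi> * r)"
      using Cauchy_Schwarz_ineq2[of \<xi> "y - w0"] by (simp add: r_def abs_le_iff)
    have gy: "F w0 + G \<bullet> (y - w0) + \<mu> * r^2 \<le> F y" using grow by (simp add: r_def)
    have "F w0 + c0 + \<xi> \<bullet> w0 + r * (\<mu> * r - B) \<le> F w0 + G \<bullet> (y - w0) + \<mu> * r^2 + c0 + \<xi> \<bullet> w0 + \<xi> \<bullet> (y - w0)"
      using g1 g2 by (simp add: B_def power2_eq_square algebra_simps)
    also have "\<dots> \<le> F y + (c0 + \<xi> \<bullet> y)"
      using gy inner_diff_right[of \<xi> y w0] by linarith
    finally have "F y + (c0 + \<xi> \<bullet> y) > F w0 + hv" using rr unfolding D_def by linarith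
    then have "ereal (F w0) + h w0 < ereal (F y) + ereal (c0 + \<xi> \<bullet> y)" by (simp add: hw0)
    also have "\<dots> \<le> ereal (F y) + h y" using lowb by (intro add_left_mono) auto
    finally show ?thesis .
  qed
  define K where "K = cball w0 R"
  have "bounded (F ` K)"
    by (intro compact_imp_bounded compact_continuous_image continuous_on_subset[OF contF]) (auto simp: K_def)
  then obtain BF where BF: "\<forall>y\<in>K. abs (F y) \<le> BF" by (auto simp: bounded_iff)
  define lb where "lb = c0 - norm \<xi> * (norm w0 + R)"
  define ub where "ub = F w0 + hv + BF"
  have lbK: "lb \<le> c0 + \<xi> \<bullet> y" if "y \<in> K" for y
  proof -
    have "norm y \<le> norm w0 + norm (y - w0)" using norm_triangle_ineq[of w0 "y - w0"] by simp
    also have "norm (y - w0) \<le> R" using that by (simp add: K_def dist_norm norm_minus_commute)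
    finally have ny: "norm y \<le> norm w0 + R" by simp
    have "- (\<xi> \<bullet> y) \<le> norm \<xi> * norm y" using Cauchy_Schwarz_ineq2[of \<xi> y] by (simp add: abs_le_iff)
    also have "\<dots> \<le> norm \<xi> * (norm w0 + R)" using ny by (intro mult_left_mono) auto
    finally show ?thesis by (simp add: lb_def)
  qed
  define S where "S = {(x, r). h x \<le> ereal r} \<inter> (K \<times> {lb..ub})"
  have cS: "compact S" unfolding S_def K_def
    by (intro closed_Int_compact clo compact_Times compact_cball compact_Icc)
  have w0K: "w0 \<in> K" using R1 by (simp add: K_def)
  have "abs (F w0) \<le> BF" using BF w0K by blast
  moreover have "lb \<le> hv" using lbK[OF w0K] lowb[rule_format, of w0] by (simp add: hw0)
  ultimately have w0S: "(w0, hv) \<in> S" using w0K by (simp add: S_def ub_def hw0)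
  have contS: "continuous_on S (\<lambda>p. F (fst p) + snd p)"
    by (intro continuous_intros continuous_on_compose2[OF contF]) auto
  obtain p where pS: "p \<in> S" and pmin: "\<forall>q\<in>S. F (fst p) + snd p \<le> F (fst q) + snd q"
    using continuous_attains_inf[OF cS _ contS] w0S by blast
  obtain z rz where p: "p = (z, rz)" by (cases p)
  have hz: "h z \<le> ereal rz" using pS by (simp add: S_def p)
  have Phiz: "ereal (F z) + h z \<le> ereal (F z + rz)"
    using add_left_mono[OF hz, of "ereal (F z)"] by simp
  have le0: "F z + rz \<le> F w0 + hv" using pmin[rule_format, OF w0S] by (simp add: p)
  show ?thesis
  proof (intro exI allI)
    fix y
    show "ereal (F z) + h z \<le> ereal (F y) + h y"
    proof (cases "ereal (F y) + h y \<le> ereal (F w0) + h w0")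
      case True
      then have yK: "y \<in> K" using far[of y] by (force simp: K_def dist_norm norm_minus_commute)
      have hyn: "h y \<noteq> -\<infinity>" using lowb[rule_format, of y] by auto
      have "h y \<noteq> \<infinity>" using True by (auto simp: hw0)
      then obtain hy where hy: "h y = ereal hy" using hyn by (cases "h y") auto
      have "F y + hy \<le> F w0 + hv" using True by (simp add: hy hw0)
      moreover have "abs (F y) \<le> BF" using BF yK by blast
      ultimately have "hy \<le> ub" by (simp add: ub_def)
      moreover have "lb \<le> hy" using lbK[OF yK] lowb[rule_format, of y] by (simp add: hy)
      ultimately have yS: "(y, hy) \<in> S" using yK by (simp add: S_def hy)
      have "F z + rz \<le> F y + hy" using pmin[rule_format, OF yS] by (simp add: p)
      then show ?thesis using Phiz by (simp add: hy) (meson ereal_less_eq(3) order_trans)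
    next
      case False
      have "ereal (F z) + h z \<le> ereal (F w0) + h w0" using Phiz le0 by (simp add: hw0) (meson ereal_less_eq(3) order_trans)
      then show ?thesis using False by simp
    qed
  qed
qed




lemma dnorm2:
  fixes c x :: "'a::real_inner"
  shows "((\<lambda>y. (norm (c - y))\<^sup>2) has_derivative (\<lambda>v. (2 *\<^sub>R (x - c)) \<bullet> v)) (at x)"
  unfolding power2_norm_eq_inner
  by (rule has_derivative_eq_rhs[OF has_derivative_inner[OF
        has_derivative_diff[OF has_derivative_const has_derivative_ident]
        has_derivative_diff[OF has_derivative_const has_derivative_ident]]])
     (auto simp: fun_eq_iff inner_diff_left inner_diff_right inner_commute algebra_simps)

lemma dist_inf0_ex:
  assumes "dist_inf0 S \<le> ereal e" "e > 0"
  shows "\<exists>g\<in>S. infnorm g < 2 * e"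
proof -
  have "ereal e < ereal (2 * e)" using assms(2) by simp
  with assms(1) have "dist_inf0 S < ereal (2 * e)" by (rule le_less_trans)
  then show ?thesis unfolding dist_inf0_def INF_less_iff by auto
qed

lemma young:
  fixes s a y :: real
  assumes "s > 0"
  shows "a * y \<le> s * y^2 + a^2 / (4 * s)"
proof -
  have "0 \<le> (2 * s * y - a)\<^sup>2" by simp
  also have "(2 * s * y - a)\<^sup>2 = 4 * s * (s * y^2 + a^2 / (4 * s) - a * y)"
    using assms by (simp add: power2_eq_square field_simps)
  finally show ?thesis using assms by (simp add: zero_le_mult_iff)
qed

lemma ident:
  fixes a b c e :: "'a::real_inner"
  assumes "r > 0"
  shows "2 * ((a - r *\<^sub>R ((e - (1/r) *\<^sub>R (b - a)) - c)) \<bullet> (e - (1/r) *\<^sub>R (b - a)) - b \<bullet> e - (b - a) \<bullet> (e - c))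
    = (1/r) * (norm a)\<^sup>2 + r * (norm c)\<^sup>2 - (1/r) * (norm b)\<^sup>2 - r * (norm e)\<^sup>2
      - (1/r) * (norm (b - a))\<^sup>2 - r * (norm (e - c))\<^sup>2"
  using assms
  by (simp add: power2_norm_eq_inner inner_diff_left inner_diff_right inner_scaleR_left inner_scaleR_right
      inner_commute field_simps) (simp add: algebra_simps inner_commute)

locale data =
  fixes n :: nat and P :: "nat \<Rightarrow> real ^ 'd \<Rightarrow> real" and gP :: "nat \<Rightarrow> real ^ 'd \<Rightarrow> real ^ 'd"
    and h :: "real ^ 'd \<Rightarrow> ereal" and \<sigma> q :: real and w0 :: "real ^ 'd" and \<rho> :: "nat \<Rightarrow> real"
    and cd :: real
  assumes n1: "n \<ge> 1" and sig: "\<sigma> > 0"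
    and ssc: "\<forall>i\<le>n. smooth_strongly_convex (P i) (gP i) \<sigma>"
    and pcc: "proper_closed_convex h" and q0: "0 < q" and q1: "q < 1"
    and hw0: "h w0 \<noteq> \<infinity>"
    and rho: "\<forall>i\<in>{1..n}. \<rho> i > 0"
    and cd_def: "cd = sqrt (real DIM(real ^ 'd))"
begin

definition "c1 = 2 * cd / q"

lemma cd_pos: "cd > 0" by (simp add: cd_def)
lemma c1_pos: "c1 > 0" using cd_pos q0 by (simp add: c1_def)

lemma norm_cd: "norm (x :: real ^ 'd) \<le> cd * infnorm x"
  using norm_le_infnorm[of x] by (simp add: cd_def)

lemma cd_c1: "cd * q ^ t \<le> c1 * q ^ t" "2 * cd * q ^ t \<le> c1 * q ^ t"
  "cd * q ^ t \<le> c1 * q ^ Suc t"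
proof -
  have a: "2 * cd \<le> c1" using cd_pos q0 q1 by (simp add: c1_def field_simps)
  have b: "0 \<le> q ^ t" using q0 by simp
  show "2 * cd * q ^ t \<le> c1 * q ^ t" using mult_right_mono[OF a b] .
  moreover have nn: "0 \<le> cd * q ^ t" using cd_pos b by simp
  ultimately show "cd * q ^ t \<le> c1 * q ^ t" by linarith
  have "c1 * q ^ Suc t = 2 * cd * q ^ t" using q0 by (simp add: c1_def)
  then show "cd * q ^ t \<le> c1 * q ^ Suc t" using nn by linarith
qed

lemma rho_pos: "i \<in> {1..n} \<Longrightarrow> \<rho> i > 0" using rho by blast

definition "sr = (\<Sum>i=1..n. 1 / \<rho> i)"

lemma sr_ge: "i \<in> {1..n} \<Longrightarrow> 1 / \<rho> i \<le> sr"
  unfolding sr_def by (rule member_le_sum) (use rho in \<open>auto simp: less_imp_le\<close>)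

lemma sr_pos: "sr > 0"
proof -
  have "1 \<in> {1..n}" using n1 by simp
  then have "1 / \<rho> 1 \<le> sr" "1 / \<rho> 1 > 0" using sr_ge rho_pos by auto
  then show ?thesis by linarith
qed

end

locale run0 = data +
  fixes w :: "nat \<Rightarrow> real ^ 'd" and u lam :: "nat \<Rightarrow> nat \<Rightarrow> real ^ 'd"
  assumes run: "alg2_run n P gP h q w0 \<rho> w u lam"
begin

definition "ut t = (\<lambda>i. u i t + (1 / \<rho> i) *\<^sub>R lam i t)"
definition "E i t = gP i (u i t) + lam i t"
definition "SS t y = P 0 y + (\<Sum>i=1..n. \<rho> i / 2 * (norm (ut t i - y))\<^sup>2)"

lemma run_init: "i \<in> {1..n} \<Longrightarrow> u i 0 = w0" "i \<in> {1..n} \<Longrightarrow> lam i 0 = - gP i w0"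
  using run unfolding alg2_run_def by auto

lemma lam_step: "i \<in> {1..n} \<Longrightarrow> lam i (Suc t) = lam i t + \<rho> i *\<^sub>R (u i (Suc t) - w (Suc t))"
  using run unfolding alg2_run_def by auto

lemma E0: "i \<in> {1..n} \<Longrightarrow> E i 0 = 0" by (simp add: E_def run_init)

lemma E_Suc_bound: assumes "i \<in> {1..n}" shows "norm (E i (Suc t)) \<le> cd * q ^ t"
proof -
  have "infnorm (grad_phi (gP i) (\<rho> i) (lam i t) (w (Suc t)) (u i (Suc t))) \<le> q ^ t"
    using run assms unfolding alg2_run_def by auto
  moreover have "grad_phi (gP i) (\<rho> i) (lam i t) (w (Suc t)) (u i (Suc t)) = E i (Suc t)"
    by (simp add: grad_phi_def E_def lam_step[OF assms] algebra_simps)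
  ultimately have "infnorm (E i (Suc t)) \<le> q ^ t" by simp
  then have "cd * infnorm (E i (Suc t)) \<le> cd * q ^ t" using cd_pos by (intro mult_left_mono) auto
  then show ?thesis using norm_cd[of "E i (Suc t)"] by linarith
qed

lemma E_bound: assumes "i \<in> {1..n}" shows "norm (E i t) \<le> c1 * q ^ t" "norm (E i (Suc t)) \<le> c1 * q ^ t"
proof -
  show "norm (E i (Suc t)) \<le> c1 * q ^ t" using E_Suc_bound[OF assms, of t] cd_c1(1)[of t] by linarith
  show "norm (E i t) \<le> c1 * q ^ t"
  proof (cases t)
    case 0 then show ?thesis using E0[OF assms] c1_pos by simp
  next
    case (Suc t') then show ?thesis using E_Suc_bound[OF assms, of t'] cd_c1(3)[of t'] by simp
  qed
qed

lemma phi0_eq: "phi0 n P h \<rho> (ut t) y = ereal (SS t y) + h y"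
  by (cases "h y") (simp_all add: phi0_def SS_def)

lemma SS_deriv: "(SS t has_derivative (\<lambda>v. (gP 0 x + (\<Sum>i=1..n. \<rho> i *\<^sub>R (x - ut t i))) \<bullet> v)) (at x)"
proof -
  have d0: "(P 0 has_derivative (\<lambda>v. gP 0 x \<bullet> v)) (at x)"
    using ssc unfolding smooth_strongly_convex_def by auto
  show ?thesis unfolding SS_def
    by (rule has_derivative_eq_rhs[OF has_derivative_add[OF d0
          has_derivative_sum[OF has_derivative_mult_right[OF dnorm2]]]])
       (auto simp: fun_eq_iff inner_add_left inner_sum_left)
qed

lemma subgrad:
  "\<exists>g. norm g \<le> c1 * q ^ t \<and> h (w (Suc t)) \<noteq> \<infinity> \<and>
     (\<forall>y. h (w (Suc t)) + ereal ((g - gP 0 (w (Suc t)) - (\<Sum>i=1..n. \<rho> i *\<^sub>R (w (Suc t) - ut t i))) \<bullet> (y - w (Suc t))) \<le> h y)"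
proof -
  have "dist_inf0 (subdiff (phi0 n P h \<rho> (ut t)) (w (Suc t))) \<le> ereal (q ^ t)"
    using run unfolding alg2_run_def ut_def by auto
  then have "\<exists>g\<in>subdiff (phi0 n P h \<rho> (ut t)) (w (Suc t)). infnorm g < 2 * q ^ t"
    by (rule dist_inf0_ex) (use q0 in simp)
  then obtain g where g: "g \<in> subdiff (phi0 n P h \<rho> (ut t)) (w (Suc t))" and gi: "infnorm g < 2 * q ^ t"
    by blast
  have ng: "norm g \<le> c1 * q ^ t"
  proof -
    have "norm g \<le> cd * infnorm g" by (rule norm_cd)
    also have "\<dots> \<le> cd * (2 * q ^ t)" using gi cd_pos by (intro mult_left_mono) auto
    also have "\<dots> \<le> c1 * q ^ t" using cd_c1(2)[of t] by simp
    finally show ?thesis .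
  qed
  have g2: "phi0 n P h \<rho> (ut t) (w (Suc t)) \<noteq> \<infinity> \<and> (\<forall>y. phi0 n P h \<rho> (ut t) (w (Suc t)) + ereal (g \<bullet> (y - w (Suc t))) \<le> phi0 n P h \<rho> (ut t) y)"
    using g unfolding subdiff_def by (rule CollectD)
  have fin: "ereal (SS t (w (Suc t))) + h (w (Suc t)) \<noteq> \<infinity>"
    using g2 unfolding phi0_eq by (rule conjunct1)
  have sub: "\<forall>y. ereal (SS t (w (Suc t))) + h (w (Suc t)) + ereal (g \<bullet> (y - w (Suc t))) \<le> ereal (SS t y) + h y"
    using g2 unfolding phi0_eq by (rule conjunct2)
  have hfin: "h (w (Suc t)) \<noteq> \<infinity>" using fin by (cases "h (w (Suc t))") auto
  have "\<forall>y. h (w (Suc t)) + ereal ((g - (gP 0 (w (Suc t)) + (\<Sum>i=1..n. \<rho> i *\<^sub>R (w (Suc t) - ut t i)))) \<bullet> (y - w (Suc t))) \<le> h y"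
    using sum_rule[OF pcc SS_deriv hfin sub] by blast
  then have "\<forall>y. h (w (Suc t)) + ereal ((g - gP 0 (w (Suc t)) - (\<Sum>i=1..n. \<rho> i *\<^sub>R (w (Suc t) - ut t i))) \<bullet> (y - w (Suc t))) \<le> h y"
    unfolding diff_diff_eq .
  then show ?thesis using ng hfin by blast
qed


end




locale prob = data +
  fixes ws :: "real ^ 'd"
  assumes hws: "h ws \<noteq> \<infinity>"
    and kkt: "\<forall>y. h ws + ereal ((- (\<Sum>j\<le>n. gP j ws)) \<bullet> (y - ws)) \<le> h y"
begin

definition "lamS i = - gP i ws"
definition "V0 = (\<Sum>i=1..n. (1 / \<rho> i) * (norm (- gP i w0 - lamS i))\<^sup>2 + \<rho> i * (norm (w0 - ws))\<^sup>2)"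
definition "aa = 2 * real n * c1 * sr"
definition "bb = c1\<^sup>2 * (1 + 9 * real n) / (2 * \<sigma>) + 2 * real n * c1"
definition "M = (V0 + bb / aa) * exp (aa / (1 - q))"
definition "m1 = sqrt (M * sr)"
definition "RR = 3 * m1 + 1"
definition "LL = (SOME L. L \<ge> 0 \<and> (\<forall>i\<le>n. \<forall>z. norm (z - ws) \<le> RR \<longrightarrow> norm (gP i z - gP i ws) \<le> L * norm (z - ws)))"
definition "KK = (\<Sum>i=1..n. 2 * LL\<^sup>2 / \<rho> i + \<rho> i)"
definition "th = KK / (KK + 2 * \<sigma>)"
definition "ee = 2 * c1 * RR * (1 + 5 * real n) + 4 * \<sigma> * c1\<^sup>2 * sr / KK"
definition "rr = (1 + max th q) / 2"
definition "AA = max V0 (ee / (rr - th))"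
definition "ss = sqrt rr"
definition "DD = 1 + (\<Sum>i=1..n. (LL + \<rho> i) * (4 * sqrt (AA * sr)) + c1)"
definition "bt = - ln ss"
definition "CC = 2 + ln DD / bt + 1 / bt"

lemma LL_prop: "LL \<ge> 0" "i \<le> n \<Longrightarrow> norm (z - ws) \<le> RR \<Longrightarrow> norm (gP i z - gP i ws) \<le> LL * norm (z - ws)"
proof -
  have ex: "\<forall>i. \<exists>L. i \<le> n \<longrightarrow> L \<ge> 0 \<and> (\<forall>z. norm (z - ws) \<le> RR \<longrightarrow> norm (gP i z - gP i ws) \<le> L * norm (z - ws))"
  proof
    fix i show "\<exists>L. i \<le> n \<longrightarrow> L \<ge> 0 \<and> (\<forall>z. norm (z - ws) \<le> RR \<longrightarrow> norm (gP i z - gP i ws) \<le> L * norm (z - ws))"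
    proof (cases "i \<le> n")
      case True then show ?thesis using calm[of "P i" "gP i" \<sigma> ws RR] ssc by auto
    qed auto
  qed
  then obtain f where f: "\<forall>i. i \<le> n \<longrightarrow> f i \<ge> 0 \<and> (\<forall>z. norm (z - ws) \<le> RR \<longrightarrow> norm (gP i z - gP i ws) \<le> f i * norm (z - ws))"
    by (metis choice)
  define L where "L = (\<Sum>i\<le>n. f i)"
  have "L \<ge> 0 \<and> (\<forall>i\<le>n. \<forall>z. norm (z - ws) \<le> RR \<longrightarrow> norm (gP i z - gP i ws) \<le> L * norm (z - ws))"
  proof (intro conjI allI impI)
    show "L \<ge> 0" unfolding L_def using f by (auto intro: sum_nonneg)
    fix i z assume i: "i \<le> n" and z: "norm (z - ws) \<le> RR"
    have "f i \<le> L" unfolding L_def by (rule member_le_sum) (use i f in auto)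
    then have "f i * norm (z - ws) \<le> L * norm (z - ws)" by (intro mult_right_mono) auto
    then show "norm (gP i z - gP i ws) \<le> L * norm (z - ws)" using f i z by (meson order_trans)
  qed
  then have "LL \<ge> 0 \<and> (\<forall>i\<le>n. \<forall>z. norm (z - ws) \<le> RR \<longrightarrow> norm (gP i z - gP i ws) \<le> LL * norm (z - ws))"
    unfolding LL_def by (rule someI)
  then show "LL \<ge> 0" "i \<le> n \<Longrightarrow> norm (z - ws) \<le> RR \<Longrightarrow> norm (gP i z - gP i ws) \<le> LL * norm (z - ws)"
    by auto
qed

lemma KK_term: "i \<in> {1..n} \<Longrightarrow> 0 < 2 * LL\<^sup>2 / \<rho> i + \<rho> i"
proof -
  assume "i \<in> {1..n}"
  then have r: "\<rho> i > 0" by (rule rho_pos)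
  then have "2 * LL\<^sup>2 / \<rho> i \<ge> 0" by simp
  then show ?thesis using r by linarith
qed

lemma KK_pos: "KK > 0"
  unfolding KK_def using n1 KK_term by (intro sum_pos) auto

lemma KK_ge: "i \<in> {1..n} \<Longrightarrow> 2 * LL\<^sup>2 / \<rho> i + \<rho> i \<le> KK"
  unfolding KK_def by (rule member_le_sum) (use KK_term in \<open>auto intro: less_imp_le\<close>)

lemma th_props: "0 \<le> th" "th < 1"
  using KK_pos sig by (auto simp: th_def)

lemma rr_props: "th < rr" "q < rr" "rr < 1" "0 < rr"
  using th_props q0 q1 by (auto simp: rr_def)

lemma ss_props: "0 < ss" "ss < 1" "rr \<le> ss" "q \<le> ss"
proof -
  show "0 < ss" "ss < 1" using rr_props by (auto simp: ss_def)
  have "rr = sqrt rr * sqrt rr" using rr_props by simp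
  also have "\<dots> \<le> sqrt rr * 1" using rr_props by (intro mult_left_mono) auto
  finally show "rr \<le> ss" by (simp add: ss_def)
  then show "q \<le> ss" using rr_props by simp
qed

lemma bt_pos: "bt > 0" using ss_props by (simp add: bt_def)

lemma V0_nonneg: "V0 \<ge> 0"
  unfolding V0_def
proof (intro sum_nonneg)
  fix i assume "i \<in> {1..n}"
  then have r: "\<rho> i > 0" by (rule rho_pos)
  then have "1 / \<rho> i * (norm (- gP i w0 - lamS i))\<^sup>2 \<ge> 0" "\<rho> i * (norm (w0 - ws))\<^sup>2 \<ge> 0" by simp_all
  then show "0 \<le> 1 / \<rho> i * (norm (- gP i w0 - lamS i))\<^sup>2 + \<rho> i * (norm (w0 - ws))\<^sup>2" by linarith
qed

lemma aa_pos: "aa > 0"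
proof -
  have "real n > 0" using n1 by simp
  then show ?thesis using c1_pos sr_pos by (simp add: aa_def)
qed
lemma bb_nonneg: "bb \<ge> 0" using c1_pos sig by (simp add: bb_def)

lemma M_nonneg: "M \<ge> 0" using V0_nonneg aa_pos bb_nonneg by (simp add: M_def)

lemma ee_nonneg: "ee \<ge> 0"
  using c1_pos sig sr_pos KK_pos M_nonneg by (simp add: ee_def RR_def m1_def)

lemma AA_nonneg: "AA \<ge> 0" using V0_nonneg by (simp add: AA_def)

lemma DD_ge: "DD \<ge> 1"
proof -
  have "0 \<le> (\<Sum>i=1..n. (LL + \<rho> i) * (4 * sqrt (AA * sr)) + c1)"
  proof (intro sum_nonneg)
    fix i assume "i \<in> {1..n}"
    then have r: "\<rho> i > 0" by (rule rho_pos)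
    have "0 \<le> (LL + \<rho> i) * (4 * sqrt (AA * sr))" using r LL_prop(1) AA_nonneg sr_pos by simp
    then show "0 \<le> (LL + \<rho> i) * (4 * sqrt (AA * sr)) + c1" using c1_pos by linarith
  qed
  then show ?thesis by (simp add: DD_def)
qed

lemma CC_pos: "CC > 0"
  using DD_ge bt_pos by (simp add: CC_def add_pos_nonneg)

end




locale run = prob + run0
begin

definition "V t = (\<Sum>i=1..n. (1 / \<rho> i) * (norm (lam i t - lamS i))\<^sup>2 + \<rho> i * (norm (u i t - ws))\<^sup>2)"

lemma V_term_nonneg: "i \<in> {1..n} \<Longrightarrow> 0 \<le> (1 / \<rho> i) * (norm (lam i t - lamS i))\<^sup>2 + \<rho> i * (norm (u i t - ws))\<^sup>2"
proof -
  assume "i \<in> {1..n}"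
  then have r: "\<rho> i > 0" by (rule rho_pos)
  then have "(1 / \<rho> i) * (norm (lam i t - lamS i))\<^sup>2 \<ge> 0" "\<rho> i * (norm (u i t - ws))\<^sup>2 \<ge> 0" by simp_all
  then show ?thesis by linarith
qed

lemma V_nonneg: "V t \<ge> 0" unfolding V_def using V_term_nonneg by (intro sum_nonneg) auto

lemma V_0: "V 0 = V0" unfolding V_def V0_def by (rule sum.cong) (auto simp: run_init)

lemma V_terms:
  assumes i: "i \<in> {1..n}"
  shows "\<rho> i * (norm (u i t - ws))\<^sup>2 \<le> V t" "(1 / \<rho> i) * (norm (lam i t - lamS i))\<^sup>2 \<le> V t"
proof -
  have r: "\<rho> i > 0" using rho_pos[OF i] .
  have "(1 / \<rho> i) * (norm (lam i t - lamS i))\<^sup>2 + \<rho> i * (norm (u i t - ws))\<^sup>2 \<le> V t"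
    unfolding V_def by (rule member_le_sum[where f="\<lambda>i. (1 / \<rho> i) * (norm (lam i t - lamS i))\<^sup>2 + \<rho> i * (norm (u i t - ws))\<^sup>2"])
      (use i V_term_nonneg in auto)
  moreover have "(1 / \<rho> i) * (norm (lam i t - lamS i))\<^sup>2 \<ge> 0" "\<rho> i * (norm (u i t - ws))\<^sup>2 \<ge> 0" using r by auto
  ultimately show "\<rho> i * (norm (u i t - ws))\<^sup>2 \<le> V t" "(1 / \<rho> i) * (norm (lam i t - lamS i))\<^sup>2 \<le> V t" by linarith+
qed

lemma dist_u2: assumes i: "i \<in> {1..n}" shows "(norm (u i t - ws))\<^sup>2 \<le> V t * sr"
proof -
  have r: "\<rho> i > 0" using rho_pos[OF i] .
  have "(norm (u i t - ws))\<^sup>2 \<le> V t / \<rho> i" using V_terms(1)[OF i, of t] r by (simp add: pos_le_divide_eq mult.commute)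
  also have "\<dots> = V t * (1 / \<rho> i)" by simp
  also have "\<dots> \<le> V t * sr" using sr_ge[OF i] V_nonneg[of t] by (intro mult_left_mono) auto
  finally show ?thesis .
qed

lemma dist_u: "i \<in> {1..n} \<Longrightarrow> norm (u i t - ws) \<le> sqrt (V t * sr)"
  using dist_u2 by (intro real_le_rsqrt) auto

lemma dist_lam: assumes i: "i \<in> {1..n}" shows "norm (lam i t - lamS i) / \<rho> i \<le> sqrt (V t * sr)"
proof (rule real_le_rsqrt)
  have r: "\<rho> i > 0" using rho_pos[OF i] .
  have "(norm (lam i t - lamS i) / \<rho> i)\<^sup>2 = (1 / \<rho> i) * ((1 / \<rho> i) * (norm (lam i t - lamS i))\<^sup>2)"
    by (simp add: power_divide power2_eq_square)
  also have "\<dots> \<le> (1 / \<rho> i) * V t" using V_terms(2)[OF i, of t] r by (intro mult_left_mono) auto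
  also have "\<dots> \<le> sr * V t" using sr_ge[OF i] V_nonneg[of t] by (intro mult_right_mono) auto
  finally show "(norm (lam i t - lamS i) / \<rho> i)\<^sup>2 \<le> V t * sr" by (simp add: mult.commute)
qed

lemma dist_w: "norm (w (Suc t) - ws) \<le> 2 * sqrt (V (Suc t) * sr) + sqrt (V t * sr)"
proof -
  have i: "1 \<in> {1..n}" using n1 by simp
  have r: "\<rho> 1 > 0" using rho_pos[OF i] .
  have ls: "lam 1 (Suc t) - lam 1 t = \<rho> 1 *\<^sub>R (u 1 (Suc t) - w (Suc t))" using lam_step[OF i, of t] by simp
  have "(1 / \<rho> 1) *\<^sub>R (lam 1 (Suc t) - lam 1 t) = u 1 (Suc t) - w (Suc t)" unfolding ls using r by simp
  then have xe: "w (Suc t) - ws = (u 1 (Suc t) - ws) - (1 / \<rho> 1) *\<^sub>R ((lam 1 (Suc t) - lamS 1) - (lam 1 t - lamS 1))"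
    by (simp add: algebra_simps)
  have "norm (w (Suc t) - ws) \<le> norm (u 1 (Suc t) - ws) + norm ((1 / \<rho> 1) *\<^sub>R ((lam 1 (Suc t) - lamS 1) - (lam 1 t - lamS 1)))"
    unfolding xe by (rule norm_triangle_ineq4)
  also have "norm ((1 / \<rho> 1) *\<^sub>R ((lam 1 (Suc t) - lamS 1) - (lam 1 t - lamS 1)))
      = norm ((lam 1 (Suc t) - lamS 1) - (lam 1 t - lamS 1)) / \<rho> 1" using r by simp
  also have "\<dots> \<le> (norm (lam 1 (Suc t) - lamS 1) + norm (lam 1 t - lamS 1)) / \<rho> 1"
    using r by (intro divide_right_mono norm_triangle_ineq4) auto
  also have "\<dots> = norm (lam 1 (Suc t) - lamS 1) / \<rho> 1 + norm (lam 1 t - lamS 1) / \<rho> 1" by (simp add: add_divide_distrib)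
  finally show ?thesis using dist_u[OF i, of "Suc t"] dist_lam[OF i, of "Suc t"] dist_lam[OF i, of t] by linarith
qed

lemma lyap:
  assumes g: "\<forall>y. h (w (Suc t)) + ereal ((g - gP 0 (w (Suc t)) - (\<Sum>i=1..n. \<rho> i *\<^sub>R (w (Suc t) - ut t i))) \<bullet> (y - w (Suc t))) \<le> h y"
    and hx: "h (w (Suc t)) \<noteq> \<infinity>"
  shows "V (Suc t) + 2 * \<sigma> * ((norm (w (Suc t) - ws))\<^sup>2 + (\<Sum>i=1..n. (norm (u i (Suc t) - ws))\<^sup>2))
    \<le> V t + 2 * (g \<bullet> (w (Suc t) - ws) + (\<Sum>i=1..n. E i (Suc t) \<bullet> (u i (Suc t) - ws) + (u i (Suc t) - u i t) \<bullet> (E i (Suc t) - E i t)))"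
proof -
  define x where "x = w (Suc t)"
  have gx: "\<forall>y. h x + ereal ((g - gP 0 x - (\<Sum>i=1..n. \<rho> i *\<^sub>R (x - ut t i))) \<bullet> (y - x)) \<le> h y"
    using g by (simp add: x_def)
  have hxx: "h x \<noteq> \<infinity>" using hx by (simp add: x_def)
  define \<xi> where "\<xi> = g - gP 0 x - (\<Sum>i=1..n. \<rho> i *\<^sub>R (x - ut t i))"
  define \<xi>s where "\<xi>s = - (\<Sum>j\<le>n. gP j ws)"
  define tm where "tm i = ((lam i t - lamS i) - \<rho> i *\<^sub>R (x - u i t)) \<bullet> (x - ws)" for i
  define er where "er i = E i (Suc t) \<bullet> (u i (Suc t) - ws) + (u i (Suc t) - u i t) \<bullet> (E i (Suc t) - E i t)" for i
  have hm: "0 \<le> (\<xi> - \<xi>s) \<bullet> (x - ws)"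
  proof -
    have nm: "\<forall>z. h z \<noteq> -\<infinity>" using pcc_props(1)[OF pcc] .
    obtain hx' where hx': "h x = ereal hx'" using hxx nm by (cases "h x") auto
    obtain hs where hs: "h ws = ereal hs" using hws nm by (cases "h ws") auto
    have 1: "hs + \<xi>s \<bullet> (x - ws) \<le> hx'" using kkt[rule_format, of x] by (simp add: hx' hs \<xi>s_def)
    have 2: "hx' + \<xi> \<bullet> (ws - x) \<le> hs" using gx[rule_format, of ws] by (simp add: hx' hs \<xi>_def)
    have 3: "\<xi> \<bullet> (ws - x) = - (\<xi> \<bullet> (x - ws))" by (simp add: inner_diff_right)
    from 1 2 3 show ?thesis by (simp add: inner_diff_left)
  qed
  have s0: "smooth_strongly_convex (P 0) (gP 0) \<sigma>" using ssc by auto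
  have sm0: "\<sigma> * (norm (x - ws))\<^sup>2 \<le> (gP 0 x - gP 0 ws) \<bullet> (x - ws)"
    using s0 unfolding smooth_strongly_convex_def by blast
  have vid: "\<xi> - \<xi>s + (gP 0 x - gP 0 ws) = g + (\<Sum>i=1..n. (lam i t - lamS i) - \<rho> i *\<^sub>R (x - u i t))"
  proof -
    have s1: "(\<Sum>j\<le>n. gP j ws) = gP 0 ws + (\<Sum>i=1..n. gP i ws)"
    proof -
      have "{..n} = insert 0 {1..n}" by auto
      then show ?thesis by simp
    qed
    have s2: "(\<Sum>i=1..n. \<rho> i *\<^sub>R (x - ut t i)) = (\<Sum>i=1..n. \<rho> i *\<^sub>R (x - u i t) - lam i t)"
    proof (rule sum.cong[OF refl])
      fix i assume i: "i \<in> {1..n}"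
      then have "\<rho> i \<noteq> 0" using rho_pos by force
      then show "\<rho> i *\<^sub>R (x - ut t i) = \<rho> i *\<^sub>R (x - u i t) - lam i t" by (simp add: ut_def algebra_simps)
    qed
    show ?thesis unfolding \<xi>_def \<xi>s_def s1 s2 lamS_def
      by (simp add: sum.distrib sum_subtractf algebra_simps)
  qed
  have A1: "\<sigma> * (norm (x - ws))\<^sup>2 \<le> g \<bullet> (x - ws) + (\<Sum>i=1..n. tm i)"
  proof -
    have "(\<xi> - \<xi>s + (gP 0 x - gP 0 ws)) \<bullet> (x - ws) = g \<bullet> (x - ws) + (\<Sum>i=1..n. tm i)"
      unfolding vid tm_def by (simp add: inner_add_left inner_sum_left)
    moreover have "(\<xi> - \<xi>s + (gP 0 x - gP 0 ws)) \<bullet> (x - ws) = (\<xi> - \<xi>s) \<bullet> (x - ws) + (gP 0 x - gP 0 ws) \<bullet> (x - ws)"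
      by (simp add: inner_add_left)
    ultimately show ?thesis using hm sm0 by linarith
  qed
  have per_i: "(1 / \<rho> i) * (norm (lam i (Suc t) - lamS i))\<^sup>2 + \<rho> i * (norm (u i (Suc t) - ws))\<^sup>2 + 2 * \<sigma> * (norm (u i (Suc t) - ws))\<^sup>2
      \<le> (1 / \<rho> i) * (norm (lam i t - lamS i))\<^sup>2 + \<rho> i * (norm (u i t - ws))\<^sup>2 + (- 2 * tm i + 2 * er i)"
    if i: "i \<in> {1..n}" for i
  proof -
    have r: "\<rho> i > 0" using rho_pos[OF i] .
    define a where "a = lam i t - lamS i"
    define b where "b = lam i (Suc t) - lamS i"
    define c where "c = u i t - ws"
    define e where "e = u i (Suc t) - ws"
    have ls: "lam i (Suc t) - lam i t = \<rho> i *\<^sub>R (u i (Suc t) - x)" using lam_step[OF i, of t] by (simp add: x_def)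
    have ba: "b - a = \<rho> i *\<^sub>R (u i (Suc t) - x)" using ls by (simp add: a_def b_def)
    have "(1 / \<rho> i) *\<^sub>R (b - a) = u i (Suc t) - x" unfolding ba using r by simp
    then have xw: "x - ws = e - (1 / \<rho> i) *\<^sub>R (b - a)" by (simp add: e_def algebra_simps)
    have xu: "x - u i t = (e - (1 / \<rho> i) *\<^sub>R (b - a)) - c" using xw by (simp add: c_def algebra_simps)
    have tmi: "tm i = (a - \<rho> i *\<^sub>R ((e - (1 / \<rho> i) *\<^sub>R (b - a)) - c)) \<bullet> (e - (1 / \<rho> i) *\<^sub>R (b - a))"
      by (simp only: tm_def a_def[symmetric] xu xw)
    have I: "2 * (tm i - b \<bullet> e - (b - a) \<bullet> (e - c)) = (1/\<rho> i) * (norm a)\<^sup>2 + \<rho> i * (norm c)\<^sup>2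
        - (1/\<rho> i) * (norm b)\<^sup>2 - \<rho> i * (norm e)\<^sup>2 - (1/\<rho> i) * (norm (b - a))\<^sup>2 - \<rho> i * (norm (e - c))\<^sup>2"
      unfolding tmi by (rule ident[OF r])
    have si: "smooth_strongly_convex (P i) (gP i) \<sigma>" using ssc i by auto
    then have mon: "\<And>u v. \<sigma> * (norm (u - v))\<^sup>2 \<le> (gP i u - gP i v) \<bullet> (u - v)"
      unfolding smooth_strongly_convex_def by blast
    have gun: "gP i (u i (Suc t)) = E i (Suc t) - lam i (Suc t)" by (simp add: E_def)
    have guo: "gP i (u i t) = E i t - lam i t" by (simp add: E_def)
    have eq1: "gP i (u i (Suc t)) - gP i ws = E i (Suc t) - b" by (simp add: gun b_def lamS_def)
    have eq2: "gP i (u i (Suc t)) - gP i (u i t) = (E i (Suc t) - E i t) - (b - a)" by (simp add: gun guo a_def b_def)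
    have ec: "e - c = u i (Suc t) - u i t" by (simp add: e_def c_def)
    have B1: "\<sigma> * (norm e)\<^sup>2 \<le> (E i (Suc t) - b) \<bullet> e"
      using mon[of "u i (Suc t)" ws] unfolding eq1 by (simp add: e_def)
    have B2: "\<sigma> * (norm (e - c))\<^sup>2 \<le> ((E i (Suc t) - E i t) - (b - a)) \<bullet> (e - c)"
      using mon[of "u i (Suc t)" "u i t"] unfolding eq2 ec .
    have B1': "b \<bullet> e \<le> E i (Suc t) \<bullet> e - \<sigma> * (norm e)\<^sup>2" using B1 by (simp add: inner_diff_left)
    have B2': "(b - a) \<bullet> (e - c) \<le> (E i (Suc t) - E i t) \<bullet> (e - c)"
    proof -
      have "0 \<le> \<sigma> * (norm (e - c))\<^sup>2" using sig by simp
      then show ?thesis using B2 by (simp add: inner_diff_left)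
    qed
    have er_eq: "er i = E i (Suc t) \<bullet> e + (E i (Suc t) - E i t) \<bullet> (e - c)"
      unfolding er_def ec by (simp add: e_def inner_commute)
    have sq: "0 \<le> (1/\<rho> i) * (norm (b - a))\<^sup>2" "0 \<le> \<rho> i * (norm (e - c))\<^sup>2" using r by auto
    have I2: "2 * tm i - 2 * (b \<bullet> e) - 2 * ((b - a) \<bullet> (e - c)) = (1/\<rho> i) * (norm a)\<^sup>2 + \<rho> i * (norm c)\<^sup>2
      - (1/\<rho> i) * (norm b)\<^sup>2 - \<rho> i * (norm e)\<^sup>2 - (1/\<rho> i) * (norm (b - a))\<^sup>2 - \<rho> i * (norm (e - c))\<^sup>2"
      using I by (simp only: right_diff_distrib)
    have m: "2 * \<sigma> * (norm e)\<^sup>2 = 2 * (\<sigma> * (norm e)\<^sup>2)" by simp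
    have B1'': "2 * (b \<bullet> e) \<le> 2 * (E i (Suc t) \<bullet> e) - 2 * (\<sigma> * (norm e)\<^sup>2)" using B1' by linarith
    have B2'': "2 * ((b - a) \<bullet> (e - c)) \<le> 2 * ((E i (Suc t) - E i t) \<bullet> (e - c))" using B2' by linarith
    have er2: "2 * er i = 2 * (E i (Suc t) \<bullet> e) + 2 * ((E i (Suc t) - E i t) \<bullet> (e - c))" using er_eq by simp
    have goal_abc: "(1 / \<rho> i) * (norm b)\<^sup>2 + \<rho> i * (norm e)\<^sup>2 + 2 * \<sigma> * (norm e)\<^sup>2
      \<le> (1 / \<rho> i) * (norm a)\<^sup>2 + \<rho> i * (norm c)\<^sup>2 + (- 2 * tm i + 2 * er i)"
      using I2 B1'' B2'' er2 sq m by linarith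
    show ?thesis using goal_abc unfolding a_def b_def c_def e_def .
  qed
  have S: "V (Suc t) + 2 * \<sigma> * (\<Sum>i=1..n. (norm (u i (Suc t) - ws))\<^sup>2) \<le> V t + (\<Sum>i=1..n. - 2 * tm i + 2 * er i)"
  proof -
    have "(\<Sum>i=1..n. (1 / \<rho> i) * (norm (lam i (Suc t) - lamS i))\<^sup>2 + \<rho> i * (norm (u i (Suc t) - ws))\<^sup>2 + 2 * \<sigma> * (norm (u i (Suc t) - ws))\<^sup>2)
      \<le> (\<Sum>i=1..n. (1 / \<rho> i) * (norm (lam i t - lamS i))\<^sup>2 + \<rho> i * (norm (u i t - ws))\<^sup>2 + (- 2 * tm i + 2 * er i))"
      by (rule sum_mono) (use per_i in auto)
    then show ?thesis by (simp add: V_def sum.distrib sum_distrib_left)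
  qed
  have S2: "(\<Sum>i=1..n. - 2 * tm i + 2 * er i) = - 2 * (\<Sum>i=1..n. tm i) + 2 * (\<Sum>i=1..n. er i)"
    by (simp only: sum.distrib sum_distrib_left[symmetric])
  have S3: "2 * \<sigma> * ((norm (x - ws))\<^sup>2 + (\<Sum>i=1..n. (norm (u i (Suc t) - ws))\<^sup>2))
      = 2 * (\<sigma> * (norm (x - ws))\<^sup>2) + 2 * \<sigma> * (\<Sum>i=1..n. (norm (u i (Suc t) - ws))\<^sup>2)"
    by (simp add: algebra_simps)
  have "V (Suc t) + 2 * \<sigma> * ((norm (x - ws))\<^sup>2 + (\<Sum>i=1..n. (norm (u i (Suc t) - ws))\<^sup>2))
    \<le> V t + 2 * (g \<bullet> (x - ws) + (\<Sum>i=1..n. er i))"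
    using S S2 S3 A1 distrib_left[of 2 "g \<bullet> (x - ws)" "\<Sum>i=1..n. er i"] by linarith
  then show ?thesis by (simp only: x_def er_def)
qed


end




lemma e1_aux:
  fixes Y m d Z :: real
  shows "Y + m * (9 * Y + 2 * d + 2 * Z) = (1 + 9 * m) * Y + (2 * m * d + 2 * m * Z)"
  by (simp add: algebra_simps)

lemma young2:
  fixes s a y :: real
  assumes "s > 0"
  shows "2 * (a * y) \<le> 2 * (s * y\<^sup>2) + a\<^sup>2 / (2 * s)"
proof -
  have "0 \<le> (2 * s * y - a)\<^sup>2 / (2 * s)" using assms by simp
  also have "(2 * s * y - a)\<^sup>2 / (2 * s) = 2 * (s * y\<^sup>2) + a\<^sup>2 / (2 * s) - 2 * (a * y)"
    using assms by (simp add: power2_eq_square field_simps)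
  finally show ?thesis by simp
qed

context data
begin

lemma dsq: "(c1 * q ^ t)\<^sup>2 \<le> c1\<^sup>2 * q ^ t"
proof -
  have a: "0 \<le> q ^ t" "q ^ t \<le> 1" using q0 q1 by (auto intro: power_le_one)
  have "(q ^ t)\<^sup>2 = q ^ t * q ^ t" by (simp add: power2_eq_square)
  also have "\<dots> \<le> q ^ t * 1" using a by (intro mult_left_mono) auto
  finally have "(q ^ t)\<^sup>2 \<le> q ^ t" by simp
  then have "c1\<^sup>2 * (q ^ t)\<^sup>2 \<le> c1\<^sup>2 * q ^ t" by (intro mult_left_mono) auto
  then show ?thesis by (simp add: power_mult_distrib)
qed

end

context prob
begin

lemma term_count:
  assumes tau: "0 < \<tau>" "\<tau> \<le> 1"
  shows "\<exists>t. real (Suc t) \<le> CC * (1 + \<bar>ln \<tau>\<bar>) \<and> DD * ss ^ t \<le> \<tau>"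
proof -
  define y where "y = (ln DD - ln \<tau>) / bt"
  have lnD: "ln DD \<ge> 0" using DD_ge by simp
  have lnt: "ln \<tau> \<le> 0" using tau by simp
  have y0: "y \<ge> 0" using lnD lnt bt_pos by (simp add: y_def)
  define t where "t = nat \<lceil>y\<rceil>"
  have tc: "real t = of_int \<lceil>y\<rceil>" using y0 by (simp add: t_def)
  have ty1: "y \<le> real t" using tc by simp
  have ty2: "real t \<le> y + 1" using tc by simp
  have ssp: "ss ^ t = exp (real t * ln ss)"
    using ss_props(1) by (simp add: powr_realpow[symmetric] powr_def)
  have "DD * ss ^ t = exp (ln DD) * exp (real t * ln ss)" using DD_ge ssp by simp
  also have "\<dots> = exp (ln DD - real t * bt)" by (simp add: exp_add[symmetric] bt_def)
  also have "\<dots> \<le> exp (ln \<tau>)"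
  proof -
    have "y * bt \<le> real t * bt" using ty1 bt_pos by (intro mult_right_mono) auto
    moreover have "y * bt = ln DD - ln \<tau>" using bt_pos by (simp add: y_def)
    ultimately show ?thesis by simp
  qed
  also have "\<dots> = \<tau>" using tau by simp
  finally have A: "DD * ss ^ t \<le> \<tau>" .
  have abs: "\<bar>ln \<tau>\<bar> = - ln \<tau>" using lnt by simp
  have B: "real (Suc t) \<le> CC * (1 + \<bar>ln \<tau>\<bar>)"
  proof -
    have "real (Suc t) \<le> y + 2" using ty2 by simp
    also have "y = ln DD / bt + \<bar>ln \<tau>\<bar> / bt" using abs by (simp add: y_def diff_divide_distrib)
    finally have 1: "real (Suc t) \<le> ln DD / bt + \<bar>ln \<tau>\<bar> / bt + 2" by simp
    have c: "1 / bt \<le> CC" using lnD bt_pos by (simp add: CC_def)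
    have "\<bar>ln \<tau>\<bar> / bt = (1 / bt) * \<bar>ln \<tau>\<bar>" by simp
    also have "\<dots> \<le> CC * \<bar>ln \<tau>\<bar>" using c by (intro mult_right_mono) auto
    finally have 2: "\<bar>ln \<tau>\<bar> / bt \<le> CC * \<bar>ln \<tau>\<bar>" .
    have 3: "CC * (1 + \<bar>ln \<tau>\<bar>) = CC + CC * \<bar>ln \<tau>\<bar>" by (simp add: algebra_simps)
    have c3b: "CC = 2 + ln DD / bt + 1 / bt" by (simp add: CC_def)
    have 4: "0 \<le> 1 / bt" using bt_pos by simp
    show ?thesis using 1 2 3 c3b 4 by linarith
  qed
  show ?thesis using A B by blast
qed

end

context run
begin

lemma err_bound:
  assumes ng: "norm g \<le> c1 * q ^ t"
  shows "g \<bullet> (w (Suc t) - ws) + (\<Sum>i=1..n. E i (Suc t) \<bullet> (u i (Suc t) - ws) + (u i (Suc t) - u i t) \<bullet> (E i (Suc t) - E i t))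
     \<le> (c1 * q ^ t) * norm (w (Suc t) - ws) + (\<Sum>i=1..n. 3 * ((c1 * q ^ t) * norm (u i (Suc t) - ws)) + 2 * ((c1 * q ^ t) * norm (u i t - ws)))"
proof -
  define \<delta> where "\<delta> = c1 * q ^ t"
  have \<delta>0: "0 \<le> \<delta>" using c1_pos q0 by (simp add: \<delta>_def)
  have 1: "g \<bullet> (w (Suc t) - ws) \<le> \<delta> * norm (w (Suc t) - ws)"
  proof -
    have "g \<bullet> (w (Suc t) - ws) \<le> norm g * norm (w (Suc t) - ws)" by (rule norm_cauchy_schwarz)
    also have "\<dots> \<le> \<delta> * norm (w (Suc t) - ws)" using ng by (intro mult_right_mono) (auto simp: \<delta>_def)
    finally show ?thesis .
  qed
  have 2: "E i (Suc t) \<bullet> (u i (Suc t) - ws) + (u i (Suc t) - u i t) \<bullet> (E i (Suc t) - E i t)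
      \<le> 3 * (\<delta> * norm (u i (Suc t) - ws)) + 2 * (\<delta> * norm (u i t - ws))" if i: "i \<in> {1..n}" for i
  proof -
    have a: "E i (Suc t) \<bullet> (u i (Suc t) - ws) \<le> \<delta> * norm (u i (Suc t) - ws)"
    proof -
      have "E i (Suc t) \<bullet> (u i (Suc t) - ws) \<le> norm (E i (Suc t)) * norm (u i (Suc t) - ws)" by (rule norm_cauchy_schwarz)
      also have "\<dots> \<le> \<delta> * norm (u i (Suc t) - ws)" using E_bound(2)[OF i, of t] by (intro mult_right_mono) (auto simp: \<delta>_def)
      finally show ?thesis .
    qed
    have nu: "norm (u i (Suc t) - u i t) \<le> norm (u i (Suc t) - ws) + norm (u i t - ws)"
      using norm_triangle_ineq4[of "u i (Suc t) - ws" "u i t - ws"] by simp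
    have nE: "norm (E i (Suc t) - E i t) \<le> 2 * \<delta>"
      unfolding \<delta>_def using norm_triangle_ineq4[of "E i (Suc t)" "E i t"] E_bound[OF i, of t] by linarith
    have "(u i (Suc t) - u i t) \<bullet> (E i (Suc t) - E i t) \<le> norm (u i (Suc t) - u i t) * norm (E i (Suc t) - E i t)"
      by (rule norm_cauchy_schwarz)
    also have "\<dots> \<le> (norm (u i (Suc t) - ws) + norm (u i t - ws)) * (2 * \<delta>)" using nu nE by (intro mult_mono) auto
    also have "\<dots> = 2 * (\<delta> * norm (u i (Suc t) - ws)) + 2 * (\<delta> * norm (u i t - ws))" by (simp add: algebra_simps)
    finally show ?thesis using a by linarith
  qed
  have "(\<Sum>i=1..n. E i (Suc t) \<bullet> (u i (Suc t) - ws) + (u i (Suc t) - u i t) \<bullet> (E i (Suc t) - E i t))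
      \<le> (\<Sum>i=1..n. 3 * (\<delta> * norm (u i (Suc t) - ws)) + 2 * (\<delta> * norm (u i t - ws)))"
    by (rule sum_mono) (rule 2)
  then show ?thesis using 1 unfolding \<delta>_def by linarith
qed

lemma lyap2:
  assumes ng: "norm g \<le> c1 * q ^ t"
    and g: "\<forall>y. h (w (Suc t)) + ereal ((g - gP 0 (w (Suc t)) - (\<Sum>i=1..n. \<rho> i *\<^sub>R (w (Suc t) - ut t i))) \<bullet> (y - w (Suc t))) \<le> h y"
    and hx: "h (w (Suc t)) \<noteq> \<infinity>"
  shows "V (Suc t) + 2 * \<sigma> * ((norm (w (Suc t) - ws))\<^sup>2 + (\<Sum>i=1..n. (norm (u i (Suc t) - ws))\<^sup>2))
    \<le> V t + 2 * ((c1 * q ^ t) * norm (w (Suc t) - ws) + (\<Sum>i=1..n. 3 * ((c1 * q ^ t) * norm (u i (Suc t) - ws)) + 2 * ((c1 * q ^ t) * norm (u i t - ws))))"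
proof -
  have "V (Suc t) + 2 * \<sigma> * ((norm (w (Suc t) - ws))\<^sup>2 + (\<Sum>i=1..n. (norm (u i (Suc t) - ws))\<^sup>2))
    \<le> V t + 2 * (g \<bullet> (w (Suc t) - ws) + (\<Sum>i=1..n. E i (Suc t) \<bullet> (u i (Suc t) - ws) + (u i (Suc t) - u i t) \<bullet> (E i (Suc t) - E i t)))"
    by (rule lyap[OF g hx])
  also have "\<dots> \<le> V t + 2 * ((c1 * q ^ t) * norm (w (Suc t) - ws) + (\<Sum>i=1..n. 3 * ((c1 * q ^ t) * norm (u i (Suc t) - ws)) + 2 * ((c1 * q ^ t) * norm (u i t - ws))))"
    using err_bound[OF ng] by simp
  finally show ?thesis .
qed

lemma step_bound: "V (Suc t) \<le> (1 + aa * q ^ t) * V t + bb * q ^ t"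
proof -
  obtain g where ng: "norm g \<le> c1 * q ^ t" and hx: "h (w (Suc t)) \<noteq> \<infinity>"
    and g: "\<forall>y. h (w (Suc t)) + ereal ((g - gP 0 (w (Suc t)) - (\<Sum>i=1..n. \<rho> i *\<^sub>R (w (Suc t) - ut t i))) \<bullet> (y - w (Suc t))) \<le> h y"
    using subgrad[of t] by blast
  define \<delta> where "\<delta> = c1 * q ^ t"
  have \<delta>0: "0 \<le> \<delta>" using c1_pos q0 by (simp add: \<delta>_def)
  define D where "D = norm (w (Suc t) - ws)"
  define e where "e i = norm (u i (Suc t) - ws)" for i
  define c where "c i = norm (u i t - ws)" for i
  have L1: "V (Suc t) + 2 * \<sigma> * (D\<^sup>2 + (\<Sum>i=1..n. (e i)\<^sup>2))
      \<le> V t + 2 * (\<delta> * D + (\<Sum>i=1..n. 3 * (\<delta> * e i) + 2 * (\<delta> * c i)))"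
    using lyap2[OF ng g hx] unfolding \<delta>_def D_def e_def c_def .
  have q1: "2 * \<sigma> * (D\<^sup>2 + (\<Sum>i=1..n. (e i)\<^sup>2)) = 2 * (\<sigma> * D\<^sup>2) + (\<Sum>i=1..n. 2 * (\<sigma> * (e i)\<^sup>2))"
    by (simp add: distrib_left sum_distrib_left mult.assoc)
  have q2: "2 * (\<delta> * D + (\<Sum>i=1..n. 3 * (\<delta> * e i) + 2 * (\<delta> * c i)))
      = 2 * (\<delta> * D) + (\<Sum>i=1..n. 2 * (3 * (\<delta> * e i) + 2 * (\<delta> * c i)))"
    by (simp only: distrib_left sum_distrib_left)
  have q3: "(\<Sum>i=1..n. 2 * (3 * (\<delta> * e i) + 2 * (\<delta> * c i)) - 2 * (\<sigma> * (e i)\<^sup>2))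
      = (\<Sum>i=1..n. 2 * (3 * (\<delta> * e i) + 2 * (\<delta> * c i))) - (\<Sum>i=1..n. 2 * (\<sigma> * (e i)\<^sup>2))"
    by (rule sum_subtractf)
  have y1: "2 * (\<delta> * D) \<le> 2 * (\<sigma> * D\<^sup>2) + \<delta>\<^sup>2 / (2 * \<sigma>)" by (rule young2[OF sig])
  have pi: "2 * (3 * (\<delta> * e i) + 2 * (\<delta> * c i)) - 2 * (\<sigma> * (e i)\<^sup>2)
      \<le> 9 * (\<delta>\<^sup>2 / (2 * \<sigma>)) + 2 * \<delta> + 2 * (\<delta> * (V t * sr))" if i: "i \<in> {1..n}" for i
  proof -
    have y2: "2 * ((3 * \<delta>) * e i) \<le> 2 * (\<sigma> * (e i)\<^sup>2) + (3 * \<delta>)\<^sup>2 / (2 * \<sigma>)" by (rule young2[OF sig])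
    have y2e: "(3 * \<delta>)\<^sup>2 / (2 * \<sigma>) = 9 * (\<delta>\<^sup>2 / (2 * \<sigma>))" by (simp add: power2_eq_square)
    have y2f: "2 * ((3 * \<delta>) * e i) = 2 * (3 * (\<delta> * e i))" by simp
    have c2: "(c i)\<^sup>2 \<le> V t * sr" unfolding c_def by (rule dist_u2[OF i])
    have "0 \<le> (c i - 1)\<^sup>2" by simp
    then have "2 * c i \<le> 1 + (c i)\<^sup>2" by (simp add: power2_eq_square algebra_simps)
    then have "2 * c i \<le> 1 + V t * sr" using c2 by linarith
    then have "\<delta> * (2 * c i) \<le> \<delta> * (1 + V t * sr)" using \<delta>0 by (intro mult_left_mono) auto
    then have y3: "2 * (2 * (\<delta> * c i)) \<le> 2 * \<delta> + 2 * (\<delta> * (V t * sr))" by (simp add: algebra_simps)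
    have d: "2 * (3 * (\<delta> * e i) + 2 * (\<delta> * c i)) = 2 * (3 * (\<delta> * e i)) + 2 * (2 * (\<delta> * c i))" by simp
    show ?thesis using y2 y2e y2f y3 d by linarith
  qed
  have sumb: "(\<Sum>i=1..n. 2 * (3 * (\<delta> * e i) + 2 * (\<delta> * c i)) - 2 * (\<sigma> * (e i)\<^sup>2))
      \<le> (\<Sum>i=1..n. 9 * (\<delta>\<^sup>2 / (2 * \<sigma>)) + 2 * \<delta> + 2 * (\<delta> * (V t * sr)))"
    by (rule sum_mono) (rule pi)
  have sc: "(\<Sum>i=1..n. 9 * (\<delta>\<^sup>2 / (2 * \<sigma>)) + 2 * \<delta> + 2 * (\<delta> * (V t * sr)))
      = real n * (9 * (\<delta>\<^sup>2 / (2 * \<sigma>)) + 2 * \<delta> + 2 * (\<delta> * (V t * sr)))" by simp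
  have F1: "V (Suc t) \<le> V t + (\<delta>\<^sup>2 / (2 * \<sigma>) + real n * (9 * (\<delta>\<^sup>2 / (2 * \<sigma>)) + 2 * \<delta> + 2 * (\<delta> * (V t * sr))))"
    using L1 q1 q2 q3 y1 sumb sc by linarith
  have d2: "\<delta>\<^sup>2 / (2 * \<sigma>) \<le> c1\<^sup>2 * q ^ t / (2 * \<sigma>)"
    using dsq[of t] sig by (intro divide_right_mono) (auto simp: \<delta>_def)
  have "V (Suc t) \<le> V t + (\<delta>\<^sup>2 / (2 * \<sigma>) + real n * (9 * (\<delta>\<^sup>2 / (2 * \<sigma>)) + 2 * \<delta> + 2 * (\<delta> * (V t * sr))))"
    by (rule F1)
  also have "\<dots> = V t + ((1 + 9 * real n) * (\<delta>\<^sup>2 / (2 * \<sigma>)) + (2 * real n * \<delta> + aa * q ^ t * V t))"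
  proof -
    have e1: "\<delta>\<^sup>2 / (2 * \<sigma>) + real n * (9 * (\<delta>\<^sup>2 / (2 * \<sigma>)) + 2 * \<delta> + 2 * (\<delta> * (V t * sr)))
      = (1 + 9 * real n) * (\<delta>\<^sup>2 / (2 * \<sigma>)) + (2 * real n * \<delta> + 2 * real n * (\<delta> * (V t * sr)))"
      by (rule e1_aux)
    have e2: "2 * real n * (\<delta> * (V t * sr)) = aa * q ^ t * V t" by (simp add: aa_def \<delta>_def algebra_simps)
    show ?thesis using e1 e2 by linarith
  qed
  also have "\<dots> \<le> V t + ((1 + 9 * real n) * (c1\<^sup>2 * q ^ t / (2 * \<sigma>)) + (2 * real n * \<delta> + aa * q ^ t * V t))"
    using d2 by (intro add_left_mono add_right_mono mult_left_mono) auto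
  also have "\<dots> = (1 + aa * q ^ t) * V t + bb * q ^ t"
    using sig by (simp add: bb_def \<delta>_def field_simps)
  finally show ?thesis .
qed

lemma V_aux: "V t + bb / aa \<le> (V0 + bb / aa) * exp (aa * (\<Sum>s<t. q ^ s))"
proof (induction t)
  case 0 then show ?case by (simp add: V_0)
next
  case (Suc t)
  have nn: "0 \<le> V t + bb / aa" using V_nonneg[of t] aa_pos bb_nonneg by simp
  have "V (Suc t) + bb / aa \<le> (1 + aa * q ^ t) * V t + bb * q ^ t + bb / aa" using step_bound[of t] by simp
  also have "\<dots> = (1 + aa * q ^ t) * (V t + bb / aa)" using aa_pos by (simp add: field_simps)
  also have "\<dots> \<le> exp (aa * q ^ t) * (V t + bb / aa)" using nn by (intro mult_right_mono) auto
  also have "\<dots> \<le> exp (aa * q ^ t) * ((V0 + bb / aa) * exp (aa * (\<Sum>s<t. q ^ s)))"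
    using Suc.IH by (intro mult_left_mono) auto
  also have "\<dots> = (V0 + bb / aa) * exp (aa * (\<Sum>s<Suc t. q ^ s))"
    by (simp add: distrib_left exp_add mult_ac)
  finally show ?case .
qed

lemma V_le_M: "V t \<le> M"
proof -
  have s: "(\<Sum>s<t. q ^ s) \<le> 1 / (1 - q)"
  proof -
    have "(\<Sum>s<t. q ^ s) = (1 - q ^ t) / (1 - q)" using q1 by (simp add: sum_gp_strict)
    also have "\<dots> \<le> 1 / (1 - q)" using q0 q1 by (intro divide_right_mono) auto
    finally show ?thesis .
  qed
  have nn: "0 \<le> V0 + bb / aa" using V0_nonneg aa_pos bb_nonneg by simp
  have "V t \<le> V t + bb / aa" using aa_pos bb_nonneg by simp
  also have "\<dots> \<le> (V0 + bb / aa) * exp (aa * (\<Sum>s<t. q ^ s))" by (rule V_aux)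
  also have "\<dots> \<le> (V0 + bb / aa) * exp (aa / (1 - q))"
  proof -
    have "aa * (\<Sum>s<t. q ^ s) \<le> aa * (1 / (1 - q))" using s aa_pos by (intro mult_left_mono) auto
    then show ?thesis using nn by (intro mult_left_mono) auto
  qed
  finally show ?thesis by (simp add: M_def)
qed

lemma m1_nonneg: "m1 \<ge> 0" using M_nonneg sr_pos by (simp add: m1_def)

lemma sqrt_le_m1: "sqrt (V t * sr) \<le> m1"
proof -
  have "V t * sr \<le> M * sr" by (rule mult_right_mono) (use V_le_M sr_pos in auto)
  then show ?thesis unfolding m1_def by (rule real_sqrt_le_mono)
qed

lemma rad_u: "i \<in> {1..n} \<Longrightarrow> norm (u i t - ws) \<le> RR"
  using dist_u[of i t] sqrt_le_m1[of t] m1_nonneg by (simp add: RR_def)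

lemma rad_w: "norm (w (Suc t) - ws) \<le> RR"
  using dist_w[of t] sqrt_le_m1[of t] sqrt_le_m1[of "Suc t"] m1_nonneg by (simp add: RR_def)

end




context run
begin

lemma rate_step: "V (Suc t) \<le> th * V t + ee * q ^ t"
proof -
  obtain g where ng: "norm g \<le> c1 * q ^ t" and hx: "h (w (Suc t)) \<noteq> \<infinity>"
    and g: "\<forall>y. h (w (Suc t)) + ereal ((g - gP 0 (w (Suc t)) - (\<Sum>i=1..n. \<rho> i *\<^sub>R (w (Suc t) - ut t i))) \<bullet> (y - w (Suc t))) \<le> h y"
    using subgrad[of t] by blast
  define \<delta> where "\<delta> = c1 * q ^ t"
  have \<delta>0: "0 \<le> \<delta>" using c1_pos q0 by (simp add: \<delta>_def)
  define D where "D = norm (w (Suc t) - ws)"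
  define e where "e i = norm (u i (Suc t) - ws)" for i
  define c where "c i = norm (u i t - ws)" for i
  define X where "X = (\<Sum>i=1..n. (e i)\<^sup>2)"
  have L1: "V (Suc t) + 2 * \<sigma> * (D\<^sup>2 + X)
      \<le> V t + 2 * (\<delta> * D + (\<Sum>i=1..n. 3 * (\<delta> * e i) + 2 * (\<delta> * c i)))"
    using lyap2[OF ng g hx] unfolding \<delta>_def D_def e_def c_def X_def .
  have RR0: "0 \<le> RR" using m1_nonneg by (simp add: RR_def)
  have Eb: "\<delta> * D + (\<Sum>i=1..n. 3 * (\<delta> * e i) + 2 * (\<delta> * c i)) \<le> \<delta> * RR * (1 + 5 * real n)"
  proof -
    have a: "\<delta> * D \<le> \<delta> * RR" using rad_w[of t] \<delta>0 by (intro mult_left_mono) (auto simp: D_def)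
    have b: "(\<Sum>i=1..n. 3 * (\<delta> * e i) + 2 * (\<delta> * c i)) \<le> (\<Sum>i=1..n. 5 * (\<delta> * RR))"
    proof (rule sum_mono)
      fix i assume i: "i \<in> {1..n}"
      have "\<delta> * e i \<le> \<delta> * RR" using rad_u[OF i, of "Suc t"] \<delta>0 by (intro mult_left_mono) (auto simp: e_def)
      moreover have "\<delta> * c i \<le> \<delta> * RR" using rad_u[OF i, of t] \<delta>0 by (intro mult_left_mono) (auto simp: c_def)
      ultimately show "3 * (\<delta> * e i) + 2 * (\<delta> * c i) \<le> 5 * (\<delta> * RR)" by linarith
    qed
    have c: "(\<Sum>i=1..n. 5 * (\<delta> * RR)) = real n * (5 * (\<delta> * RR))" by simp
    have d: "\<delta> * RR * (1 + 5 * real n) = \<delta> * RR + real n * (5 * (\<delta> * RR))" by (simp add: algebra_simps)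
    show ?thesis using a b c d by linarith
  qed
  have L2: "V (Suc t) + 2 * \<sigma> * X \<le> V t + 2 * (\<delta> * RR * (1 + 5 * real n))"
  proof -
    have "2 * \<sigma> * X \<le> 2 * \<sigma> * (D\<^sup>2 + X)" using sig by (intro mult_left_mono) auto
    then have "V (Suc t) + 2 * \<sigma> * X \<le> V (Suc t) + 2 * \<sigma> * (D\<^sup>2 + X)" by simp
    also have "\<dots> \<le> V t + 2 * (\<delta> * D + (\<Sum>i=1..n. 3 * (\<delta> * e i) + 2 * (\<delta> * c i)))" by (rule L1)
    also have "\<dots> \<le> V t + 2 * (\<delta> * RR * (1 + 5 * real n))" using Eb by simp
    finally show ?thesis .
  qed
  have U: "V (Suc t) \<le> KK * X + 2 * \<delta>\<^sup>2 * sr"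
  proof -
    have pi: "(1 / \<rho> i) * (norm (lam i (Suc t) - lamS i))\<^sup>2 + \<rho> i * (norm (u i (Suc t) - ws))\<^sup>2
        \<le> 2 * \<delta>\<^sup>2 * (1 / \<rho> i) + KK * (e i)\<^sup>2" if i: "i \<in> {1..n}" for i
    proof -
      have r: "\<rho> i > 0" using rho_pos[OF i] .
      have iln: "i \<le> n" using i by simp
      have veq: "lam i (Suc t) - lamS i = E i (Suc t) - (gP i (u i (Suc t)) - gP i ws)"
        by (simp add: E_def lamS_def algebra_simps)
      have nb: "norm (lam i (Suc t) - lamS i) \<le> \<delta> + LL * e i"
      proof -
        have "norm (lam i (Suc t) - lamS i) \<le> norm (E i (Suc t)) + norm (gP i (u i (Suc t)) - gP i ws)"
          unfolding veq by (rule norm_triangle_ineq4)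
        moreover have "norm (E i (Suc t)) \<le> \<delta>" using E_bound(2)[OF i, of t] by (simp add: \<delta>_def)
        moreover have "norm (gP i (u i (Suc t)) - gP i ws) \<le> LL * e i"
          using LL_prop(2)[OF iln rad_u[OF i, of "Suc t"]] by (simp add: e_def)
        ultimately show ?thesis by linarith
      qed
      have "(norm (lam i (Suc t) - lamS i))\<^sup>2 \<le> (\<delta> + LL * e i)\<^sup>2"
        using nb by (intro power_mono) auto
      also have "\<dots> \<le> 2 * \<delta>\<^sup>2 + 2 * LL\<^sup>2 * (e i)\<^sup>2"
      proof -
        have "0 \<le> (\<delta> - LL * e i)\<^sup>2" by simp
        then show ?thesis by (simp add: power2_eq_square algebra_simps)
      qed
      finally have nb2: "(norm (lam i (Suc t) - lamS i))\<^sup>2 \<le> 2 * \<delta>\<^sup>2 + 2 * LL\<^sup>2 * (e i)\<^sup>2" .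
      have "(1 / \<rho> i) * (norm (lam i (Suc t) - lamS i))\<^sup>2 \<le> (1 / \<rho> i) * (2 * \<delta>\<^sup>2 + 2 * LL\<^sup>2 * (e i)\<^sup>2)"
        using nb2 r by (intro mult_left_mono) auto
      moreover have "(1 / \<rho> i) * (2 * \<delta>\<^sup>2 + 2 * LL\<^sup>2 * (e i)\<^sup>2) + \<rho> i * (e i)\<^sup>2
          = 2 * \<delta>\<^sup>2 * (1 / \<rho> i) + (2 * LL\<^sup>2 / \<rho> i + \<rho> i) * (e i)\<^sup>2"
        by (simp add: algebra_simps)
      moreover have "(2 * LL\<^sup>2 / \<rho> i + \<rho> i) * (e i)\<^sup>2 \<le> KK * (e i)\<^sup>2"
        using KK_ge[OF i] by (intro mult_right_mono) auto
      moreover have "\<rho> i * (norm (u i (Suc t) - ws))\<^sup>2 = \<rho> i * (e i)\<^sup>2" by (simp add: e_def)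
      ultimately show ?thesis by linarith
    qed
    have "V (Suc t) \<le> (\<Sum>i=1..n. 2 * \<delta>\<^sup>2 * (1 / \<rho> i) + KK * (e i)\<^sup>2)"
      unfolding V_def by (rule sum_mono) (rule pi)
    also have "\<dots> = 2 * \<delta>\<^sup>2 * sr + KK * X"
      by (simp add: sum.distrib sum_distrib_left sr_def X_def)
    finally show ?thesis by simp
  qed
  have K0: "KK > 0" by (rule KK_pos)
  have m1: "KK * V (Suc t) + KK * (2 * \<sigma> * X) \<le> KK * V t + KK * (2 * (\<delta> * RR * (1 + 5 * real n)))"
  proof -
    have "KK * (V (Suc t) + 2 * \<sigma> * X) \<le> KK * (V t + 2 * (\<delta> * RR * (1 + 5 * real n)))"
      using L2 K0 by (intro mult_left_mono) auto
    then show ?thesis by (simp add: distrib_left)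
  qed
  have m2: "2 * \<sigma> * V (Suc t) \<le> 2 * \<sigma> * (KK * X) + 2 * \<sigma> * (2 * \<delta>\<^sup>2 * sr)"
  proof -
    have "2 * \<sigma> * V (Suc t) \<le> 2 * \<sigma> * (KK * X + 2 * \<delta>\<^sup>2 * sr)"
      using U sig by (intro mult_left_mono) auto
    then show ?thesis by (simp add: distrib_left)
  qed
  have eqX: "KK * (2 * \<sigma> * X) = 2 * \<sigma> * (KK * X)" by (simp add: mult_ac)
  have eqD: "(KK + 2 * \<sigma>) * V (Suc t) = KK * V (Suc t) + 2 * \<sigma> * V (Suc t)" by (simp add: distrib_right)
  have m3: "(KK + 2 * \<sigma>) * V (Suc t) \<le> KK * V t + KK * (2 * (\<delta> * RR * (1 + 5 * real n))) + 2 * \<sigma> * (2 * \<delta>\<^sup>2 * sr)"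
    using m1 m2 eqX eqD by linarith
  have pos: "KK + 2 * \<sigma> > 0" using K0 sig by simp
  define E1 where "E1 = 2 * (\<delta> * RR * (1 + 5 * real n))"
  define F where "F = 2 * \<delta>\<^sup>2 * sr"
  have E10: "0 \<le> E1" using \<delta>0 RR0 by (simp add: E1_def)
  have F0: "0 \<le> F" using sr_pos by (simp add: F_def)
  have "V (Suc t) \<le> (KK * V t + KK * E1 + 2 * \<sigma> * F) / (KK + 2 * \<sigma>)"
    using m3 pos unfolding E1_def F_def by (simp add: pos_le_divide_eq mult.commute)
  also have "\<dots> = th * V t + th * E1 + 2 * \<sigma> * F / (KK + 2 * \<sigma>)"
    using pos by (simp add: th_def add_divide_distrib)
  also have "\<dots> \<le> th * V t + E1 + 2 * \<sigma> * F / KK"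
  proof -
    have "th * E1 \<le> E1" using th_props E10 by (simp add: mult_left_le_one_le)
    moreover have "2 * \<sigma> * F / (KK + 2 * \<sigma>) \<le> 2 * \<sigma> * F / KK"
      using sig F0 K0 by (intro divide_left_mono) auto
    ultimately show ?thesis by linarith
  qed
  also have "\<dots> \<le> th * V t + ee * q ^ t"
  proof -
    have a: "E1 = 2 * c1 * RR * (1 + 5 * real n) * q ^ t" by (simp add: E1_def \<delta>_def algebra_simps)
    have b1: "2 * \<sigma> * F / KK = (4 * \<sigma> * sr / KK) * \<delta>\<^sup>2" by (simp add: F_def)
    have b2: "(4 * \<sigma> * sr / KK) * \<delta>\<^sup>2 \<le> (4 * \<sigma> * sr / KK) * (c1\<^sup>2 * q ^ t)"
      using dsq[of t] sig sr_pos K0 by (intro mult_left_mono) (auto simp: \<delta>_def)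
    have b3: "(4 * \<sigma> * sr / KK) * (c1\<^sup>2 * q ^ t) = 4 * \<sigma> * c1\<^sup>2 * sr / KK * q ^ t" by simp
    have c: "ee * q ^ t = 2 * c1 * RR * (1 + 5 * real n) * q ^ t + 4 * \<sigma> * c1\<^sup>2 * sr / KK * q ^ t"
      by (simp add: ee_def algebra_simps)
    show ?thesis using a b1 b2 b3 c by linarith
  qed
  finally show ?thesis .
qed

lemma V_lin: "V t \<le> AA * rr ^ t"
proof (induction t)
  case 0 then show ?case using V_0 by (simp add: AA_def)
next
  case (Suc t)
  have "V (Suc t) \<le> th * V t + ee * q ^ t" by (rule rate_step)
  also have "\<dots> \<le> th * (AA * rr ^ t) + ee * rr ^ t"
  proof -
    have "th * V t \<le> th * (AA * rr ^ t)" using Suc.IH th_props by (intro mult_left_mono) auto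
    moreover have "ee * q ^ t \<le> ee * rr ^ t"
      using ee_nonneg q0 rr_props by (intro mult_left_mono power_mono) auto
    ultimately show ?thesis by linarith
  qed
  also have "\<dots> \<le> AA * rr ^ Suc t"
  proof -
    have d: "rr - th > 0" using rr_props by simp
    have "ee / (rr - th) \<le> AA" by (simp add: AA_def)
    then have "ee \<le> AA * (rr - th)" using d by (simp add: pos_divide_le_eq)
    then have "ee * rr ^ t \<le> AA * (rr - th) * rr ^ t" using rr_props by (intro mult_right_mono) auto
    moreover have "AA * (rr - th) * rr ^ t = AA * rr ^ Suc t - th * (AA * rr ^ t)" by (simp add: algebra_simps)
    ultimately show ?thesis by linarith
  qed
  finally show ?case .
qed

lemma sq_rate: "sqrt (V t * sr) \<le> sqrt (AA * sr) * ss ^ t" "sqrt (V (Suc t) * sr) \<le> sqrt (AA * sr) * ss ^ t"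
proof -
  have e: "sqrt (AA * rr ^ t * sr) = sqrt (AA * sr) * ss ^ t"
    by (simp add: ss_def real_sqrt_mult real_sqrt_power mult_ac)
  have "V t * sr \<le> AA * rr ^ t * sr" using V_lin[of t] sr_pos by (intro mult_right_mono) auto
  then show "sqrt (V t * sr) \<le> sqrt (AA * sr) * ss ^ t" unfolding e[symmetric] by (rule real_sqrt_le_mono)
  have "rr ^ Suc t \<le> rr ^ t" using rr_props by (simp add: power_decreasing)
  then have "AA * rr ^ Suc t \<le> AA * rr ^ t" using AA_nonneg by (intro mult_left_mono) auto
  then have "V (Suc t) * sr \<le> AA * rr ^ t * sr" using V_lin[of "Suc t"] sr_pos by (intro mult_right_mono) auto
  then show "sqrt (V (Suc t) * sr) \<le> sqrt (AA * sr) * ss ^ t" unfolding e[symmetric] by (rule real_sqrt_le_mono)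
qed

lemma eps_bound:
  assumes i: "i \<in> {1..n}"
  shows "eps_tilde gP \<rho> w u lam i t \<le> ((LL + \<rho> i) * (4 * sqrt (AA * sr)) + c1) * ss ^ t"
proof -
  define x where "x = w (Suc t)"
  have iln: "i \<le> n" using i by simp
  have r: "\<rho> i > 0" using rho_pos[OF i] .
  define K where "K = sqrt (AA * sr)"
  define Dn where "Dn = norm (x - ws)"
  define cn where "cn = norm (u i t - ws)"
  have veq: "grad_phi (gP i) (\<rho> i) (lam i t) x x - \<rho> i *\<^sub>R (x - u i t)
      = ((gP i x - gP i ws) - (gP i (u i t) - gP i ws)) + (E i t - \<rho> i *\<^sub>R (x - u i t))"
    by (simp add: grad_phi_def E_def algebra_simps)
  have "eps_tilde gP \<rho> w u lam i t \<le> norm (grad_phi (gP i) (\<rho> i) (lam i t) x x - \<rho> i *\<^sub>R (x - u i t))"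
    unfolding eps_tilde_def x_def by (rule infnorm_le_norm)
  also have "\<dots> \<le> norm (gP i x - gP i ws) + norm (gP i (u i t) - gP i ws) + norm (E i t) + norm (\<rho> i *\<^sub>R (x - u i t))"
  proof -
    have t1: "norm (((gP i x - gP i ws) - (gP i (u i t) - gP i ws)) + (E i t - \<rho> i *\<^sub>R (x - u i t)))
        \<le> norm ((gP i x - gP i ws) - (gP i (u i t) - gP i ws)) + norm (E i t - \<rho> i *\<^sub>R (x - u i t))"
      by (rule norm_triangle_ineq)
    have t2: "norm ((gP i x - gP i ws) - (gP i (u i t) - gP i ws)) \<le> norm (gP i x - gP i ws) + norm (gP i (u i t) - gP i ws)"
      by (rule norm_triangle_ineq4)
    have t3: "norm (E i t - \<rho> i *\<^sub>R (x - u i t)) \<le> norm (E i t) + norm (\<rho> i *\<^sub>R (x - u i t))"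
      by (rule norm_triangle_ineq4)
    show ?thesis unfolding veq using t1 t2 t3 by linarith
  qed
  also have "\<dots> \<le> LL * Dn + LL * cn + c1 * q ^ t + \<rho> i * (Dn + cn)"
  proof -
    have a: "norm (gP i x - gP i ws) \<le> LL * Dn"
      using LL_prop(2)[OF iln rad_w[of t]] by (simp add: Dn_def x_def)
    have b: "norm (gP i (u i t) - gP i ws) \<le> LL * cn"
      using LL_prop(2)[OF iln rad_u[OF i, of t]] by (simp add: cn_def)
    have c: "norm (E i t) \<le> c1 * q ^ t" by (rule E_bound(1)[OF i])
    have "norm (x - u i t) \<le> Dn + cn"
      using norm_triangle_ineq4[of "x - ws" "u i t - ws"] by (simp add: Dn_def cn_def)
    then have d: "norm (\<rho> i *\<^sub>R (x - u i t)) \<le> \<rho> i * (Dn + cn)" using r by (simp add: mult_left_mono)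
    show ?thesis using a b c d by linarith
  qed
  also have "\<dots> = (LL + \<rho> i) * (Dn + cn) + c1 * q ^ t" by (simp add: algebra_simps)
  also have "\<dots> \<le> (LL + \<rho> i) * (4 * K * ss ^ t) + c1 * ss ^ t"
  proof -
    have dn: "Dn \<le> 3 * K * ss ^ t"
      using dist_w[of t] sq_rate[of t] by (simp add: Dn_def x_def K_def)
    have cn: "cn \<le> K * ss ^ t" using dist_u[OF i, of t] sq_rate(1)[of t] by (simp add: cn_def K_def)
    have "(LL + \<rho> i) * (Dn + cn) \<le> (LL + \<rho> i) * (4 * K * ss ^ t)"
      using dn cn LL_prop(1) r by (intro mult_left_mono) auto
    moreover have "c1 * q ^ t \<le> c1 * ss ^ t" using c1_pos q0 ss_props by (intro mult_left_mono power_mono) auto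
    ultimately show ?thesis by linarith
  qed
  also have "\<dots> = ((LL + \<rho> i) * (4 * sqrt (AA * sr)) + c1) * ss ^ t" by (simp add: K_def algebra_simps)
  finally show ?thesis .
qed

lemma final:
  assumes "0 < \<tau>" "\<tau> \<le> 1"
  shows "\<exists>t. real (Suc t) \<le> CC * (1 + \<bar>ln \<tau>\<bar>) \<and> q ^ t + (\<Sum>i=1..n. eps_tilde gP \<rho> w u lam i t) \<le> \<tau>"
proof -
  obtain t where t1: "real (Suc t) \<le> CC * (1 + \<bar>ln \<tau>\<bar>)" and t2: "DD * ss ^ t \<le> \<tau>"
    using term_count[OF assms] by blast
  have "q ^ t + (\<Sum>i=1..n. eps_tilde gP \<rho> w u lam i t) \<le> ss ^ t + (\<Sum>i=1..n. ((LL + \<rho> i) * (4 * sqrt (AA * sr)) + c1) * ss ^ t)"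
    using q0 ss_props by (intro add_mono power_mono sum_mono eps_bound) auto
  also have "\<dots> = ss ^ t + (\<Sum>i=1..n. (LL + \<rho> i) * (4 * sqrt (AA * sr)) + c1) * ss ^ t"
    by (simp only: sum_distrib_right)
  also have "\<dots> = DD * ss ^ t" by (simp add: DD_def algebra_simps)
  finally show ?thesis using t1 t2 by auto
qed

end




theorem theorem4p4:
  fixes n :: nat and P :: "nat \<Rightarrow> real ^ 'd \<Rightarrow> real" and gP :: "nat \<Rightarrow> real ^ 'd \<Rightarrow> real ^ 'd"
    and h :: "real ^ 'd \<Rightarrow> ereal" and \<sigma> q :: real and w0 :: "real ^ 'd" and \<rho> :: "nat \<Rightarrow> real"
  assumes "n \<ge> 1"
    and "\<sigma> > 0"
    and "\<forall>i\<le>n. smooth_strongly_convex (P i) (gP i) \<sigma>"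
    and "proper_closed_convex h"
    and "0 < q" and "q < 1"
    and "h w0 \<noteq> \<infinity>"
    and "\<forall>i\<in>{1..n}. \<rho> i > 0"
  shows "\<exists>C>0. \<forall>\<tau>. 0 < \<tau> \<and> \<tau> \<le> 1 \<longrightarrow>
           (\<forall>w u lam. alg2_run n P gP h q w0 \<rho> w u lam \<longrightarrow>
              (\<exists>t. real (Suc t) \<le> C * (1 + \<bar>ln \<tau>\<bar>) \<and>
                   q ^ t + (\<Sum>i=1..n. eps_tilde gP \<rho> w u lam i t) \<le> \<tau>))"
proof (cases "\<exists>w u lam. alg2_run n P gP h q w0 \<rho> w u lam")
  case False
  show ?thesis
  proof (rule exI[of _ 1], intro conjI allI impI)
    show "(0::real) < 1" by simp
    fix \<tau> :: real and w u lam
    assume "0 < \<tau> \<and> \<tau> \<le> 1" and "alg2_run n P gP h q w0 \<rho> w u lam"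
    then show "\<exists>t. real (Suc t) \<le> 1 * (1 + \<bar>ln \<tau>\<bar>) \<and> q ^ t + (\<Sum>i=1..n. eps_tilde gP \<rho> w u lam i t) \<le> \<tau>"
      using False by blast
  qed
next
  case True
  define cd where "cd = sqrt (real DIM(real ^ 'd))"
  obtain wr ur lr where R: "alg2_run n P gP h q w0 \<rho> wr ur lr" using True by blast
  have Dd: "data n P gP h \<sigma> q w0 \<rho> cd" unfolding data_def using assms by (simp add: cd_def)
  interpret Dt: data n P gP h \<sigma> q w0 \<rho> cd by (rule Dd)
  interpret R0: run0 n P gP h \<sigma> q w0 \<rho> cd wr ur lr
    by (unfold_locales) (rule R)
  have nm: "\<forall>x. h x \<noteq> -\<infinity>" using pcc_props(1)[OF assms(4)] .
  obtain g where sg: "\<forall>y. h (wr (Suc 0)) + ereal ((g - gP 0 (wr (Suc 0)) - (\<Sum>i=1..n. \<rho> i *\<^sub>R (wr (Suc 0) - R0.ut 0 i))) \<bullet> (y - wr (Suc 0))) \<le> h y"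
    and hx1n: "h (wr (Suc 0)) \<noteq> \<infinity>"
    using R0.subgrad[of 0] by auto
  define \<xi> where "\<xi> = g - gP 0 (wr (Suc 0)) - (\<Sum>i=1..n. \<rho> i *\<^sub>R (wr (Suc 0) - R0.ut 0 i))"
  define x1 where "x1 = wr (Suc 0)"
  obtain hx1 where hx1: "h x1 = ereal hx1" using hx1n nm by (cases "h x1") (auto simp: x1_def)
  have lowb: "\<forall>y. ereal ((hx1 - \<xi> \<bullet> x1) + \<xi> \<bullet> y) \<le> h y"
  proof
    fix y
    have "h x1 + ereal (\<xi> \<bullet> (y - x1)) \<le> h y" using sg unfolding \<xi>_def x1_def by blast
    moreover have "h x1 + ereal (\<xi> \<bullet> (y - x1)) = ereal ((hx1 - \<xi> \<bullet> x1) + \<xi> \<bullet> y)"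
      by (simp add: hx1 inner_diff_right)
    ultimately show "ereal ((hx1 - \<xi> \<bullet> x1) + \<xi> \<bullet> y) \<le> h y" by simp
  qed
  define F where "F = (\<lambda>y. \<Sum>j\<le>n. P j y)"
  have derP: "(P j has_derivative (\<lambda>v. gP j z \<bullet> v)) (at z)" if "j \<le> n" for j z
    using assms(3) that unfolding smooth_strongly_convex_def by blast
  have dF: "(F has_derivative (\<lambda>v. (\<Sum>j\<le>n. gP j z) \<bullet> v)) (at z)" for z
    unfolding F_def
    by (rule has_derivative_eq_rhs[OF has_derivative_sum[of "{..n}" P "\<lambda>j v. gP j z \<bullet> v"]])
       (auto simp: derP inner_sum_left)
  have contF: "continuous_on UNIV F"
    by (rule continuous_at_imp_continuous_on) (use dF has_derivative_continuous in blast)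
  have grow: "\<forall>y. F w0 + (\<Sum>j\<le>n. gP j w0) \<bullet> (y - w0) + (\<sigma> / 2) * (norm (y - w0))^2 \<le> F y"
  proof
    fix y
    have "(\<Sum>j\<le>n. P j w0 + gP j w0 \<bullet> (y - w0) + \<sigma> / 2 * (norm (y - w0))\<^sup>2) \<le> (\<Sum>j\<le>n. P j y)"
    proof (rule sum_mono)
      fix j assume "j \<in> {..n}"
      then have "smooth_strongly_convex (P j) (gP j) \<sigma>" using assms(3) by auto
      then show "P j w0 + gP j w0 \<bullet> (y - w0) + \<sigma> / 2 * (norm (y - w0))\<^sup>2 \<le> P j y" by (rule ssc_grad_ineq)
    qed
    moreover have "(\<Sum>j\<le>n. P j w0 + gP j w0 \<bullet> (y - w0) + \<sigma> / 2 * (norm (y - w0))\<^sup>2)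
        = F w0 + (\<Sum>j\<le>n. gP j w0) \<bullet> (y - w0) + real (Suc n) * (\<sigma> / 2 * (norm (y - w0))\<^sup>2)"
      by (simp add: F_def sum.distrib inner_sum_left)
    moreover have "1 * (\<sigma> / 2 * (norm (y - w0))\<^sup>2) \<le> real (Suc n) * (\<sigma> / 2 * (norm (y - w0))\<^sup>2)"
      using assms(2) by (intro mult_right_mono) auto
    ultimately show "F w0 + (\<Sum>j\<le>n. gP j w0) \<bullet> (y - w0) + (\<sigma> / 2) * (norm (y - w0))^2 \<le> F y"
      by (simp add: F_def)
  qed
  obtain hv where hv: "h w0 = ereal hv" using assms(7) nm by (cases "h w0") auto
  have mu: "\<sigma> / 2 > 0" using assms(2) by simp
  obtain z where zmin: "\<forall>y. ereal (F z) + h z \<le> ereal (F y) + h y"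
    using exists_min[OF contF pcc_props(2)[OF assms(4)] hv lowb grow mu] by blast
  have hz: "h z \<noteq> \<infinity>"
  proof
    assume "h z = \<infinity>"
    then show False using zmin[rule_format, of w0] by (simp add: hv)
  qed
  have kkt: "\<forall>y. h z + ereal ((- (\<Sum>j\<le>n. gP j z)) \<bullet> (y - z)) \<le> h y"
  proof
    fix y
    have sub: "\<forall>y. ereal (F z) + h z + ereal (0 \<bullet> (y - z)) \<le> ereal (F y) + h y" using zmin by simp
    show "h z + ereal ((- (\<Sum>j\<le>n. gP j z)) \<bullet> (y - z)) \<le> h y"
      using sum_rule[OF assms(4) dF hz sub, of y] by simp
  qed
  interpret Pr: prob n P gP h \<sigma> q w0 \<rho> cd z
    by (unfold_locales) (use hz kkt in auto)
  show ?thesis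
  proof (rule exI[of _ Pr.CC], intro conjI allI impI)
    show "0 < Pr.CC" by (rule Pr.CC_pos)
    fix \<tau> :: real and w u lam
    assume tau: "0 < \<tau> \<and> \<tau> \<le> 1" and r: "alg2_run n P gP h q w0 \<rho> w u lam"
    interpret Rn: run n P gP h \<sigma> q w0 \<rho> cd z w u lam
      by (unfold_locales) (use r in auto)
    show "\<exists>t. real (Suc t) \<le> Pr.CC * (1 + \<bar>ln \<tau>\<bar>) \<and> q ^ t + (\<Sum>i=1..n. eps_tilde gP \<rho> w u lam i t) \<le> \<tau>"
      using Rn.final tau by auto
  qed
qed


end
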